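(* Let $q$ be a prime power, let $\gamma$ be a primitive element of $\mathbb{F}_{q^2}$, and for any integer $a$ let $h_a(x)\in\mathbb{F}_q[x]$ denote the minimal polynomial of $\gamma^{-a}$ over $\mathbb{F}_q$. For integers $e_1,e_2$, let $\mathcal{C}_{((q+1)e_1,e_2)}$ be the cyclic code of length $q^2-1$ over $\mathbb{F}_q$ whose parity-check polynomial is $h_{(q+1)e_1}(x)h_{e_2}(x)$. Suppose $\gcd(q-1,2e_1-e_2)=1$ and $\gcd(q+1,e_2)=1$. Then: (A) $\deg(h_{(q+1)e_1}(x))=1$ and $\deg(h_{e_2}(x))=2$. Moreover, $h_{(q+1)e_1}(x)$ and $h_{e_2}(x)$ are the parity-check polynomials of two different one-weight cyclic codes of length $q^2-1$ over $\mathbb{F}_q$, whose (unique) nonzero weights are $q^2-1$ and $q(q-1)$, respectively. (B) $\mathcal{C}_{((q+1)e_1,e_2)}$ is an optimal three-weight $[q^2-1,3,q(q-1)-1]$ cyclic code over $\mathbb{F}_q$ whose weight distribution is: weight $0$ with frequency $1$; weight $q(q-1)-1$ with frequency $(q-1)(q^2-1)$; weight $q(q-1)$ with frequency $q^2-1$; weight $q^2-1$ with frequency $q-1$ (and no other weights occur). Moreover, if $B_j$ ($0<j\le q^2-1$) denotes the number of codewords of weight $j$ in the dual code of $\mathcal{C}_{((q+1)e_1,e_2)}$, then $B_1=B_2=0$ and $$B_3=\frac{(q^2-3)(q^2-1)(q-2)(q-1)}{6}.$$ Consequently, if $q>2$, the dual code of $\mathcal{C}_{((q+1)e_1,e_2)}$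 is a single-error-correcting cyclic code with parameters $[q^2-1,q^2-4,3]$.
   Context: A linear $[n,k,d]$ code over $\mathbb{F}_q$ is called optimal here if its length attains the Griesmer lower bound, i.e. $n=\sum_{i=0}^{k-1}\lceil d/q^i\rceil$. A one-weight (resp. three-weight) code is one having exactly one (resp. three) distinct nonzero Hamming weights. *)

theory Defs
  imports "HOL-Computational_Algebra.Polynomial" "HOL-Library.Cardinality"
begin

text \<open>Codewords of length n over a field 'a are represented as polynomials c of
  degree < n, the word being (coeff c 0, ..., coeff c (n-1)).\<close>

definition hamming_wt :: "nat \<Rightarrow> 'a::zero poly \<Rightarrow> nat" where
  "hamming_wt n c = card {i. i < n \<and> coeff c i \<noteq> 0}"

text \<open>The cyclic code of length n with parity-check polynomial h (a divisor of x^n - 1):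
  the ideal of F[x]/(x^n-1) generated by g = (x^n - 1)/h.\<close>
definition cyclic_code_pc :: "nat \<Rightarrow> 'a::field poly \<Rightarrow> 'a poly set" where
  "cyclic_code_pc n h = {c. degree c < n \<and> ((monom 1 n - 1) div h) dvd c}"

definition dual_code :: "nat \<Rightarrow> 'a::field poly set \<Rightarrow> 'a poly set" where
  "dual_code n C = {d. degree d < n \<and> (\<forall>c\<in>C. (\<Sum>i<n. coeff c i * coeff d i) = 0)}"

definition is_cyclic :: "nat \<Rightarrow> 'a::field poly set \<Rightarrow> bool" where
  "is_cyclic n C = (\<forall>c\<in>C. (monom 1 1 * c) mod (monom 1 n - 1) \<in> C)"

definition nonzero_weights :: "nat \<Rightarrow> 'a::zero poly set \<Rightarrow> nat set" where
  "nonzero_weights n C = {hamming_wt n c | c. c \<in> C \<and> c \<noteq> 0}"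

definition min_dist :: "nat \<Rightarrow> 'a::zero poly set \<Rightarrow> nat" where
  "min_dist n C = Min (nonzero_weights n C)"

definition weight_freq :: "nat \<Rightarrow> 'a::zero poly set \<Rightarrow> nat \<Rightarrow> nat" where
  "weight_freq n C w = card {c \<in> C. hamming_wt n c = w}"

definition is_linear_code :: "nat \<Rightarrow> 'a::{field,finite} poly set \<Rightarrow> bool" where
  "is_linear_code n C = (0 \<in> C \<and> (\<forall>c\<in>C. degree c < n) \<and>
     (\<forall>c\<in>C. \<forall>d\<in>C. c + d \<in> C) \<and> (\<forall>a. \<forall>c\<in>C. smult a c \<in> C))"

definition code_params :: "nat \<Rightarrow> nat \<Rightarrow> nat \<Rightarrow> 'a::{field,finite} poly set \<Rightarrow> bool" where
  "code_params n k d C = (is_linear_code n C \<and> card C = CARD('a) ^ k \<and> min_dist n C = d)"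

definition griesmer_optimal :: "nat \<Rightarrow> nat \<Rightarrow> nat \<Rightarrow> 'a::{field,finite} itself \<Rightarrow> bool" where
  "griesmer_optimal n k d _ = (int n = (\<Sum>i<k. \<lceil>real d / real (CARD('a) ^ i)\<rceil>))"

definition min_poly :: "('a::field \<Rightarrow> 'b::field) \<Rightarrow> 'b \<Rightarrow> 'a poly" where
  "min_poly emb \<beta> = (THE p. lead_coeff p = 1 \<and> poly (map_poly emb p) \<beta> = 0 \<and>
      (\<forall>r. r \<noteq> 0 \<and> poly (map_poly emb r) \<beta> = 0 \<longrightarrow> degree p \<le> degree r))"

definition field_embedding :: "('a::field \<Rightarrow> 'b::field) \<Rightarrow> bool" where
  "field_embedding emb = (inj emb \<and> emb 0 = 0 \<and> emb 1 = 1 \<and>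
     (\<forall>x y. emb (x + y) = emb x + emb y) \<and> (\<forall>x y. emb (x * y) = emb x * emb y))"

definition primitive_element :: "'b::{field,finite} \<Rightarrow> bool" where
  "primitive_element \<gamma> = (\<gamma> \<noteq> 0 \<and> (\<forall>k. 0 < k \<and> k < CARD('b) - 1 \<longrightarrow> \<gamma> ^ k \<noteq> 1))"

end

theory Submission
  imports Defs "HOL-Computational_Algebra.Primes" "HOL-Number_Theory.Cong"
begin

lemma ff_power_card:
  fixes x :: "'a :: {field,finite}"
  shows "x ^ CARD('a) = x"
proof (cases "x = 0")
  case False
  have "x * (\<Prod>y\<in>UNIV-{0}. x * y) = x * x ^ (card (UNIV :: 'a set) - 1) * \<Prod>(UNIV-{0})"
    by (simp add: prod.distrib mult_ac)
  also have "x * x ^ (card (UNIV :: 'a set) - 1) = x ^ Suc (card (UNIV :: 'a set) - 1)"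
    by (subst power_Suc) auto
  also have "Suc (card (UNIV :: 'a set) - 1) = card (UNIV :: 'a set)"
    using finite_UNIV_card_ge_0[where ?'a = 'a] by simp
  also have "(\<Prod>y\<in>UNIV-{0}. x * y) = (\<Prod>y\<in>UNIV-{0}. y)"
    by (rule prod.reindex_bij_witness[of _ "\<lambda>y. y / x" "\<lambda>y. x * y"]) (use False in auto)
  finally show ?thesis
    by simp
qed (use finite_UNIV_card_ge_0[where ?'a = 'a] in auto)

lemma ff_prime_CHAR: "prime CHAR('a :: {field,finite})"
proof -
  have "CHAR('a) > 0" by (rule finite_imp_CHAR_pos) simp
  thus ?thesis by (rule prime_CHAR_semidom)
qed

definition aclosed :: "'a::field set \<Rightarrow> bool" where
  "aclosed S \<longleftrightarrow> 0 \<in> S \<and> (\<forall>x\<in>S. \<forall>y\<in>S. x + y \<in> S)"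

lemma aclosed_of_nat_mult: "aclosed S \<Longrightarrow> x \<in> S \<Longrightarrow> of_nat m * x \<in> S"
  by (induction m) (auto simp: aclosed_def distrib_right)

lemma of_nat_mod_CHAR: "of_nat (m mod CHAR('a)) = (of_nat m :: 'a::field)"
proof -
  have "(of_nat m :: 'a) = of_nat (CHAR('a) * (m div CHAR('a)) + m mod CHAR('a))" by simp
  also have "\<dots> = of_nat (m mod CHAR('a))" by (simp only: of_nat_add of_nat_mult of_nat_CHAR) simp
  finally show ?thesis by simp
qed

lemma aclosed_neg:
  assumes "aclosed S" "x \<in> S" "CHAR('a) > 0"
  shows "- x \<in> (S :: 'a :: field set)"
proof -
  have "of_nat (CHAR('a) - 1) + 1 = (of_nat CHAR('a) :: 'a)"
    using assms(3) by (metis Suc_pred' of_nat_Suc add.commute)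
  hence "of_nat (CHAR('a) - 1) = (-1 :: 'a)" by (simp add: eq_neg_iff_add_eq_0)
  with aclosed_of_nat_mult[OF assms(1,2), of "CHAR('a) - 1"] show ?thesis by simp
qed

lemma aclosed_extend:
  fixes S :: "'a :: {field,finite} set"
  assumes S: "aclosed S" and a: "a \<notin> S"
  defines "p \<equiv> CHAR('a)"
  shows "aclosed ((\<lambda>(s,k). s + of_nat k * a) ` (S \<times> {..<p}))"
    and "card ((\<lambda>(s,k). s + of_nat k * a) ` (S \<times> {..<p})) = card S * p"
proof -
  have pp: "prime p" unfolding p_def by (rule ff_prime_CHAR)
  hence p0: "p > 0" by (simp add: prime_gt_0_nat)
  show "aclosed ((\<lambda>(s,k). s + of_nat k * a) ` (S \<times> {..<p}))"
    unfolding aclosed_def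
  proof safe
    show "0 \<in> (\<lambda>(s,k). s + of_nat k * a) ` (S \<times> {..<p})"
      using S p0 unfolding aclosed_def by (auto intro!: image_eqI[of _ _ "(0,0)"])
  next
    fix s k s' k' assume h: "s \<in> S" "k < p" "s' \<in> S" "k' < p"
    have "s + of_nat k * a + (s' + of_nat k' * a) = (s + s') + of_nat ((k + k') mod p) * a"
      unfolding p_def of_nat_mod_CHAR by (simp add: algebra_simps)
    moreover have "s + s' \<in> S" using S h unfolding aclosed_def by auto
    moreover have "(k + k') mod p < p" using p0 by simp
    ultimately show "s + of_nat k * a + (s' + of_nat k' * a) \<in> (\<lambda>(s,k). s + of_nat k * a) ` (S \<times> {..<p})"
      by (auto intro!: image_eqI[of _ _ "(s+s', (k + k') mod p)"])
  qed
  have inj: "inj_on (\<lambda>(s,k). s + of_nat k * a) (S \<times> {..<p})"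
  proof -
    have key: "k = k'" if h: "s \<in> S" "k < p" "s' \<in> S" "k' < p" "k' < k"
       "s + of_nat k * a = s' + of_nat k' * a" for s k s' k'
    proof -
      define m where "m = k - k'"
      have m: "k = k' + m" "0 < m" "m < p" using h(2,5) unfolding m_def by auto
      have "of_nat m * a = s' + (- s)" using h(6) unfolding m(1)
        by (simp add: algebra_simps)
      moreover have "s' + (-s) \<in> S" using S h aclosed_neg[OF S h(1)] p0
        unfolding aclosed_def p_def by auto
      ultimately have inS: "of_nat m * a \<in> S" by simp
      have "\<not> p dvd m" using m by (auto dest: dvd_imp_le)
      hence "coprime p m" using pp by (intro prime_imp_coprime)
      hence "coprime m p" by (simp add: coprime_commute)
      then obtain j where j: "[m * j = Suc 0] (mod p)"
        using cong_solve_coprime_nat by blast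
      hence "(of_nat (m * j) :: 'a) = of_nat (Suc 0)"
        unfolding p_def of_nat_eq_iff_cong_CHAR by simp
      hence e1: "(of_nat m :: 'a) * of_nat j = 1" by simp
      have "a = (of_nat m * of_nat j) * a" using e1 by simp
      also have "\<dots> = of_nat j * (of_nat m * a)" by (simp add: algebra_simps)
      finally have "a = of_nat j * (of_nat m * a)" .
      with aclosed_of_nat_mult[OF S inS, of j] have "a \<in> S" by simp
      with assms(2) show ?thesis by simp
    qed
    show ?thesis
    proof (rule inj_onI, clarify)
      fix s k s' k' assume h: "s \<in> S" "k < p" "s' \<in> S" "k' < p"
        "s + of_nat k * a = s' + of_nat k' * a"
      have "k = k'"
      proof (rule linorder_cases[of k k'])
        assume "k < k'" thus ?thesis using key[OF h(3,4,1,2) _ h(5)[symmetric]] by simp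
      next
        assume "k' < k" thus ?thesis using key[OF h(1-4) _ h(5)] by simp
      qed
      with h(5) show "s = s' \<and> k = k'" by simp
    qed
  qed
  show "card ((\<lambda>(s,k). s + of_nat k * a) ` (S \<times> {..<p})) = card S * p"
    by (subst card_image[OF inj]) (simp add: card_cartesian_product)
qed

lemma ff_card_CHAR_power: "\<exists>k. CARD('a :: {field,finite}) = CHAR('a) ^ k"
proof (rule ccontr)
  assume nk: "\<nexists>k. CARD('a) = CHAR('a) ^ k"
  have "\<exists>S :: 'a set. aclosed S \<and> card S = CHAR('a) ^ j" for j
  proof (induction j)
    case 0
    show ?case by (intro exI[of _ "{0}"]) (auto simp: aclosed_def)
  next
    case (Suc j)
    then obtain S :: "'a set" where S: "aclosed S" "card S = CHAR('a) ^ j" by blast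
    have "S \<noteq> UNIV"
    proof
      assume "S = UNIV" with S(2) nk show False by auto
    qed
    then obtain a where "a \<notin> S" by blast
    from aclosed_extend[OF S(1) this] S(2) show ?case
      by (intro exI) (auto simp: mult.commute)
  qed
  then obtain S :: "'a set" where S: "card S = CHAR('a) ^ CARD('a)" by blast
  have "card S \<le> CARD('a)" by (rule card_mono) auto
  moreover have "CHAR('a) ^ CARD('a) > CARD('a)"
    using ff_prime_CHAR[where 'a='a] by (intro power_gt_expt) (simp add: prime_gt_Suc_0_nat)
  ultimately show False using S by simp
qed

locale ccode =
  fixes emb :: "'a::{field,finite} \<Rightarrow> 'b::{field,finite}"
    and \<gamma> :: 'b and e1 e2 :: int and q n :: nat
  assumes q_def: "q = CARD('a)"
    and ext: "CARD('b) = q ^ 2"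
    and emb: "field_embedding emb"
    and prim: "primitive_element \<gamma>"
    and n_def: "n = q ^ 2 - 1"
    and g1: "gcd (int q - 1) (2 * e1 - e2) = 1"
    and g2: "gcd (int q + 1) e2 = 1"
begin

lemma emb_0 [simp]: "emb 0 = 0" and emb_1 [simp]: "emb 1 = 1"
  and emb_add [simp]: "emb (x + y) = emb x + emb y"
  and emb_mult [simp]: "emb (x * y) = emb x * emb y"
  using emb unfolding field_embedding_def by auto

lemma emb_inj: "inj emb" using emb unfolding field_embedding_def by auto

lemma emb_eq_iff [simp]: "emb x = emb y \<longleftrightarrow> x = y"
  using emb_inj by (auto dest: injD)

lemma emb_eq_0_iff [simp]: "emb x = 0 \<longleftrightarrow> x = 0"
  using emb_eq_iff[of x 0] by simp

lemma emb_minus [simp]: "emb (- x) = - emb x"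
proof -
  have "emb (- x) + emb x = 0" by (simp flip: emb_add)
  thus ?thesis by (simp add: eq_neg_iff_add_eq_0)
qed

lemma emb_diff [simp]: "emb (x - y) = emb x - emb y"
  using emb_add[of x "- y"] by simp

lemma emb_power [simp]: "emb (x ^ k) = emb x ^ k"
  by (induction k) auto

lemma emb_inverse [simp]: "emb (inverse x) = inverse (emb x)"
proof (cases "x = 0")
  case False
  have "emb (inverse x) * emb x = 1" using False by (simp flip: emb_mult)
  thus ?thesis using False by (simp add: field_simps)
qed simp

lemma emb_divide [simp]: "emb (x / y) = emb x / emb y"
  by (simp add: divide_inverse)

lemma emb_sum [simp]: "emb (sum f A) = sum (\<lambda>i. emb (f i)) A"
  by (induction A rule: infinite_finite_induct) auto

lemma emb_of_nat [simp]: "emb (of_nat k) = of_nat k"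
  by (induction k) auto

lemma q_ge2: "q \<ge> 2"
proof -
  have "{0, 1::'a} \<subseteq> UNIV" by simp
  hence "card {0, 1::'a} \<le> CARD('a)" by (intro card_mono) auto
  thus ?thesis unfolding q_def by simp
qed

lemma n_ge3: "n \<ge> 3"
proof -
  have "q ^ 2 \<ge> 2 ^ 2" using q_ge2 by (intro power_mono) auto
  thus ?thesis unfolding n_def by simp
qed

lemma n_pos: "n > 0" using n_ge3 by simp

lemma CHAR_eq: "CHAR('b) = CHAR('a)"
proof -
  have "(of_nat m :: 'b) = 0 \<longleftrightarrow> (of_nat m :: 'a) = 0" for m
    using emb_of_nat[of m] emb_eq_0_iff[of "of_nat m"] by simp
  hence "CHAR('b) dvd m \<longleftrightarrow> CHAR('a) dvd m" for m
    by (simp add: of_nat_eq_0_iff_char_dvd[symmetric])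
  thus ?thesis by (meson dvd_antisym dvd_refl)
qed

lemma q_CHAR_pow: "\<exists>k. q = CHAR('b) ^ k"
  using ff_card_CHAR_power[where 'a='a] unfolding q_def CHAR_eq by simp

lemma frob_add: "(x + y :: 'b) ^ q = x ^ q + y ^ q"
proof -
  obtain k where k: "q = CHAR('b) ^ k" using q_CHAR_pow by blast
  show ?thesis by (rule freshmans_dream'[OF ff_prime_CHAR k])
qed

lemma frob_minus: "(- x :: 'b) ^ q = - (x ^ q)"
proof -
  have "(- x) ^ q + x ^ q = 0" using frob_add[of "-x" x] q_ge2 by (simp add: zero_power)
  thus ?thesis by (simp add: eq_neg_iff_add_eq_0)
qed

lemma frob_diff: "(x - y :: 'b) ^ q = x ^ q - y ^ q"
  using frob_add[of x "- y"] frob_minus[of y] by simp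

lemma frob_sum: "(sum f A :: 'b) ^ q = sum (\<lambda>i. f i ^ q) A"
  using q_ge2 by (induction A rule: infinite_finite_induct) (auto simp: frob_add zero_power)

lemma emb_frob [simp]: "emb x ^ q = emb x"
  using ff_power_card[of x] unfolding q_def by (metis emb_power)

definition E :: "'b set" where "E = range emb"

lemma card_E: "card E = q"
  unfolding E_def q_def by (simp add: card_image emb_inj)

lemma E_iff: "y \<in> E \<longleftrightarrow> y ^ q = y"
proof
  assume "y \<in> E" thus "y ^ q = y" unfolding E_def by auto
next
  assume y: "y ^ q = y"
  define P :: "'b poly" where "P = monom 1 q + [:0, -1:]"
  have degP: "degree P = q" unfolding P_def using q_ge2
    by (subst degree_add_eq_left) (auto simp: degree_monom_eq)
  hence P0: "P \<noteq> 0" using q_ge2 by auto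
  have polyP: "poly P x = x ^ q - x" for x unfolding P_def by (simp add: poly_monom)
  have sub: "E \<subseteq> {x. poly P x = 0}" unfolding E_def by (auto simp: polyP)
  have "card {x. poly P x = 0} \<le> q" using card_poly_roots_bound[OF P0] degP by simp
  moreover have "card E \<le> card {x. poly P x = 0}"
    using sub poly_roots_finite[OF P0] by (intro card_mono)
  ultimately have "card E = card {x. poly P x = 0}" using card_E by simp
  hence "E = {x. poly P x = 0}"
    using sub poly_roots_finite[OF P0] by (intro card_subset_eq)
  thus "y \<in> E" using y by (simp add: polyP)
qed

lemma E_emb [simp]: "emb x \<in> E" unfolding E_def by simp

lemma E_0 [simp]: "0 \<in> E" and E_1 [simp]: "1 \<in> E"
  using q_ge2 by (simp_all add: E_iff zero_power)

lemma E_power: "x \<in> E \<Longrightarrow> x ^ k \<in> E"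
proof -
  assume "x \<in> E"
  hence x: "x ^ q = x" by (simp add: E_iff)
  have "(x ^ k) ^ q = (x ^ q) ^ k" by (simp flip: power_mult add: mult.commute)
  thus ?thesis using x by (simp add: E_iff)
qed

lemma E_add: "x \<in> E \<Longrightarrow> y \<in> E \<Longrightarrow> x + y \<in> E"
  and E_mult: "x \<in> E \<Longrightarrow> y \<in> E \<Longrightarrow> x * y \<in> E"
  and E_minus: "x \<in> E \<Longrightarrow> - x \<in> E"
  and E_diff: "x \<in> E \<Longrightarrow> y \<in> E \<Longrightarrow> x - y \<in> E"
  and E_inverse: "x \<in> E \<Longrightarrow> inverse x \<in> E"
  and E_divide: "x \<in> E \<Longrightarrow> y \<in> E \<Longrightarrow> x / y \<in> E"
  by (auto simp: E_iff frob_add frob_minus frob_diff power_mult_distrib power_inverse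
      divide_inverse)

definition embi :: "'b \<Rightarrow> 'a" where "embi = inv emb"

lemma emb_embi [simp]: "y \<in> E \<Longrightarrow> emb (embi y) = y"
  unfolding E_def embi_def by (auto simp: f_inv_into_f)

lemma embi_emb [simp]: "embi (emb x) = x"
  unfolding embi_def by (simp add: emb_inj)

lemma card_K: "CARD('b) = n + 1"
  unfolding ext n_def using q_ge2 by simp

lemma unit_pow_n: "(x :: 'b) \<noteq> 0 \<Longrightarrow> x ^ n = 1"
proof -
  assume x: "x \<noteq> 0"
  have "x * x ^ n = x ^ Suc n" by simp
  also have "Suc n = CARD('b)" using card_K by simp
  also have "x ^ CARD('b) = x" by (rule ff_power_card)
  finally show ?thesis using x by simp
qed

lemma unit_powi_mod: "(x :: 'b) \<noteq> 0 \<Longrightarrow> x powi m = x ^ nat (m mod int n)"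
proof -
  assume x: "x \<noteq> 0"
  have "m = int n * (m div int n) + m mod int n" by simp
  hence "x powi m = x powi (int n * (m div int n) + m mod int n)" by simp
  also have "\<dots> = x powi (int n * (m div int n)) * x powi (m mod int n)"
    using x by (rule power_int_add[OF disjI1])
  also have "x powi (int n * (m div int n)) = 1"
    by (simp add: power_int_mult unit_pow_n[OF x])
  also have "m mod int n = int (nat (m mod int n))" using n_pos by simp
  also have "x powi int (nat (m mod int n)) = x ^ nat (m mod int n)" by (rule power_int_of_nat)
  finally show ?thesis by simp
qed

lemma gamma_nz [simp]: "\<gamma> \<noteq> 0" using prim unfolding primitive_element_def by auto

lemma gamma_pow_eq_1: "\<gamma> ^ k = 1 \<longleftrightarrow> n dvd k"
proof
  assume h: "\<gamma> ^ k = 1"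
  have "\<gamma> ^ k = \<gamma> ^ (n * (k div n) + k mod n)" by simp
  also have "\<dots> = (\<gamma> ^ n) ^ (k div n) * \<gamma> ^ (k mod n)" by (simp only: power_add power_mult)
  finally have "\<gamma> ^ (k mod n) = 1" using h unit_pow_n[OF gamma_nz] by simp
  moreover have "k mod n < CARD('b) - 1" using n_pos card_K by simp
  moreover have pr: "\<And>j. 0 < j \<Longrightarrow> j < CARD('b) - 1 \<Longrightarrow> \<gamma> ^ j \<noteq> 1"
    using prim unfolding primitive_element_def by simp
  ultimately have "\<not> 0 < k mod n" by auto
  thus "n dvd k" by (simp add: dvd_eq_mod_eq_0)
next
  assume "n dvd k" then obtain j where "k = n * j" by blast
  thus "\<gamma> ^ k = 1" by (simp add: power_mult unit_pow_n)
qed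

lemma gamma_powi_eq_1: "\<gamma> powi m = 1 \<longleftrightarrow> int n dvd m"
proof -
  have "\<gamma> powi m = 1 \<longleftrightarrow> n dvd nat (m mod int n)"
    by (simp add: unit_powi_mod gamma_pow_eq_1)
  also have "\<dots> \<longleftrightarrow> nat (m mod int n) = 0"
  proof
    assume "n dvd nat (m mod int n)"
    moreover have "nat (m mod int n) < n" using n_pos by (simp add: nat_less_iff)
    ultimately show "nat (m mod int n) = 0" by (meson dvd_imp_le not_less neq0_conv)
  qed simp
  also have "\<dots> \<longleftrightarrow> m mod int n = 0" using n_pos pos_mod_sign[of "int n" m] by linarith
  also have "\<dots> \<longleftrightarrow> int n dvd m" by (simp add: dvd_eq_mod_eq_0)
  finally show ?thesis .
qed

end

context ccode
begin

abbreviation M :: "'a poly \<Rightarrow> 'b poly" where "M p \<equiv> map_poly emb p"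

lemma coeff_M [simp]: "coeff (M p) i = emb (coeff p i)"
  by (simp add: coeff_map_poly)

lemma M_add [simp]: "M (p + r) = M p + M r"
  by (rule poly_eqI) simp

lemma M_minus [simp]: "M (- p) = - M p"
  by (rule poly_eqI) simp

lemma M_diff [simp]: "M (p - r) = M p - M r"
  by (rule poly_eqI) simp

lemma M_mult [simp]: "M (p * r) = M p * M r"
  by (rule poly_eqI) (simp add: coeff_mult)

lemma M_smult [simp]: "M (smult a p) = smult (emb a) (M p)"
  by (rule poly_eqI) simp

lemma M_monom [simp]: "M (monom c k) = monom (emb c) k"
  by (rule poly_eqI) (simp add: coeff_monom)

lemma M_1 [simp]: "M 1 = 1"
  by simp

lemma degree_M [simp]: "degree (M p) = degree p"
  by (rule degree_map_poly) simp

lemma M_eq_0_iff [simp]: "M p = 0 \<longleftrightarrow> p = 0"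
  by (metis degree_M coeff_M emb_eq_0_iff leading_coeff_0_iff)

lemma poly_M: "degree p < N \<Longrightarrow> poly (M p) x = (\<Sum>i<N. emb (coeff p i) * x ^ i)"
proof -
  assume d: "degree p < N"
  have "poly (M p) x = (\<Sum>i\<le>degree p. emb (coeff p i) * x ^ i)"
    by (simp add: poly_altdef)
  also have "\<dots> = (\<Sum>i<N. emb (coeff p i) * x ^ i)"
    using d by (intro sum.mono_neutral_left) (auto simp: coeff_eq_0)
  finally show ?thesis .
qed

lemma M_dvd_root: "h dvd P \<Longrightarrow> poly (M h) x = 0 \<Longrightarrow> poly (M P) x = 0"
  by (auto simp: dvd_def)

lemma dvd_by_roots:
  assumes h: "h \<noteq> 0" and R: "degree h \<le> card R"
    and hR: "\<And>x. x \<in> R \<Longrightarrow> poly (M h) x = 0"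
    and PR: "\<And>x. x \<in> R \<Longrightarrow> poly (M P) x = 0"
  shows "h dvd P"
proof -
  define r where "r = P mod h"
  have P: "P = h * (P div h) + r" unfolding r_def by simp
  have rR: "poly (M r) x = 0" if "x \<in> R" for x
  proof -
    have "poly (M P) x = poly (M h) x * poly (M (P div h)) x + poly (M r) x"
      by (subst P) simp
    thus ?thesis using hR[OF that] PR[OF that] by simp
  qed
  have "r = 0"
  proof (rule ccontr)
    assume r0: "r \<noteq> 0"
    hence dr: "degree r < degree h" unfolding r_def using degree_mod_less[OF h, of P] by auto
    have Mr0: "M r \<noteq> 0" using r0 by simp
    have "R \<subseteq> {x. poly (M r) x = 0}" using rR by auto
    hence "card R \<le> card {x. poly (M r) x = 0}"
      by (intro card_mono poly_roots_finite Mr0)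
    also have "\<dots> \<le> degree r" using card_poly_roots_bound[OF Mr0] by simp
    finally show False using dr R by simp
  qed
  thus ?thesis unfolding r_def by (simp add: dvd_eq_mod_eq_0)
qed

definition Xn :: "'a poly" where "Xn = monom 1 n - 1"

lemma degree_Xn: "degree Xn = n"
  unfolding Xn_def using n_pos by (simp add: degree_diff_le degree_monom_eq
    degree_add_eq_left[of "-1" "monom 1 n", simplified])

lemma Xn_nz: "Xn \<noteq> 0" using degree_Xn n_pos by auto

lemma poly_M_Xn: "poly (M Xn) x = x ^ n - 1"
  unfolding Xn_def by (simp add: poly_monom)

lemma card_units: "card (UNIV - {0::'b}) = n"
  using card_K by (simp add: card_Diff_singleton)

lemma Xn_dvd: "(\<And>x. x \<noteq> 0 \<Longrightarrow> poly (M P) x = 0) \<Longrightarrow> Xn dvd P"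
  by (rule dvd_by_roots[OF Xn_nz, of "UNIV - {0}"]) (auto simp: degree_Xn card_units poly_M_Xn unit_pow_n)

lemma dvd_Xn:
  assumes h: "h \<noteq> 0" and R: "degree h \<le> card R" and R0: "0 \<notin> R"
    and hR: "\<And>x. x \<in> R \<Longrightarrow> poly (M h) x = 0"
  shows "h dvd Xn"
  by (rule dvd_by_roots[OF h R hR]) (use R0 in \<open>auto simp: poly_M_Xn intro!: unit_pow_n\<close>)

definition polys_lt :: "nat \<Rightarrow> 'a poly set" where
  "polys_lt k = {p. \<forall>i\<ge>k. coeff p i = 0}"

lemma card_polys_lt: "card (polys_lt k) = q ^ k"
proof (induction k)
  case 0
  have "polys_lt 0 = {0}" unfolding polys_lt_def by (auto simp: poly_eq_iff)
  thus ?case by simp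
next
  case (Suc k)
  have eq: "polys_lt (Suc k) = (\<lambda>(a, p). pCons a p) ` (UNIV \<times> polys_lt k)"
  proof (rule set_eqI, rule iffI)
    fix p assume p: "p \<in> polys_lt (Suc k)"
    obtain a r where pr: "p = pCons a r" by (cases p)
    have "r \<in> polys_lt k" unfolding polys_lt_def
    proof safe
      fix i assume "k \<le> i"
      hence "coeff p (Suc i) = 0" using p unfolding polys_lt_def by simp
      thus "coeff r i = 0" using pr by simp
    qed
    thus "p \<in> (\<lambda>(a, p). pCons a p) ` (UNIV \<times> polys_lt k)" using pr by auto
  next
    fix p assume "p \<in> (\<lambda>(a, p). pCons a p) ` (UNIV \<times> polys_lt k)"
    then obtain a r where pr: "p = pCons a r" "r \<in> polys_lt k" by auto
    show "p \<in> polys_lt (Suc k)" unfolding polys_lt_def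
    proof safe
      fix i assume "Suc k \<le> i"
      then obtain j where "i = Suc j" "k \<le> j" by (cases i) auto
      thus "coeff p i = 0" using pr unfolding polys_lt_def by simp
    qed
  qed
  have inj: "inj_on (\<lambda>(a, p). pCons a p) (UNIV \<times> polys_lt k)"
    by (auto simp: inj_on_def)
  show ?case unfolding eq card_image[OF inj] card_cartesian_product Suc.IH
    by (simp add: q_def)
qed

lemma mult_card:
  fixes H :: "'a poly"
  assumes H: "H \<noteq> 0" "degree H \<le> n"
  shows "card {c. degree c < n \<and> H dvd c} = q ^ (n - degree H)"
proof -
  have eq: "{c. degree c < n \<and> H dvd c} = (\<lambda>m. m * H) ` polys_lt (n - degree H)"
  proof (rule set_eqI, rule iffI)
    fix c assume "c \<in> {c. degree c < n \<and> H dvd c}"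
    then obtain m where c: "c = m * H" "degree c < n" by (auto simp: dvd_def mult.commute)
    have "m \<in> polys_lt (n - degree H)"
    proof (cases "m = 0")
      case False
      hence "degree c = degree m + degree H" using H c by (simp add: degree_mult_eq)
      hence "degree m < n - degree H" using c by simp
      thus ?thesis unfolding polys_lt_def by (auto intro: coeff_eq_0)
    qed (auto simp: polys_lt_def)
    thus "c \<in> (\<lambda>m. m * H) ` polys_lt (n - degree H)" using c by auto
  next
    fix c assume "c \<in> (\<lambda>m. m * H) ` polys_lt (n - degree H)"
    then obtain m where c: "c = m * H" "m \<in> polys_lt (n - degree H)" by auto
    have "degree c < n"
    proof (cases "m = 0")
      case True thus ?thesis using c n_pos by simp
    next
      case False
      hence "coeff m (degree m) \<noteq> 0" by simp
      hence "degree m < n - degree H" using c(2) unfolding polys_lt_def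
        by (metis (mono_tags, lifting) mem_Collect_eq not_less)
      thus ?thesis using c H False by (simp add: degree_mult_eq)
    qed
    thus "c \<in> {c. degree c < n \<and> H dvd c}" using c by auto
  qed
  have inj: "inj_on (\<lambda>m. m * H) (polys_lt (n - degree H))"
    using H by (auto simp: inj_on_def)
  show ?thesis unfolding eq card_image[OF inj] card_polys_lt ..
qed

end

context ccode
begin

lemma poly_M_le2: "degree p \<le> 2 \<Longrightarrow>
   poly (M p) x = emb (coeff p 0) + emb (coeff p 1) * x + emb (coeff p 2) * x ^ 2"
  by (subst poly_M[of p 3]) (auto simp: numeral_3_eq_3 numeral_2_eq_2)

lemma poly_M_le1: "degree p \<le> 1 \<Longrightarrow> poly (M p) x = emb (coeff p 0) + emb (coeff p 1) * x"
proof -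
  assume d: "degree p \<le> 1"
  hence "coeff p 2 = 0" by (intro coeff_eq_0) simp
  with d show ?thesis by (subst poly_M_le2) auto
qed

lemma const_no_root: "r \<noteq> 0 \<Longrightarrow> degree r = 0 \<Longrightarrow> poly (M r) x \<noteq> 0"
  by (subst poly_M_le1) (auto simp: coeff_eq_0 leading_coeff_0_iff[of r, symmetric] simp del: leading_coeff_0_iff)

lemma notE_deg:
  assumes b: "\<beta> \<notin> E" and r: "r \<noteq> 0" "poly (M r) \<beta> = 0"
  shows "2 \<le> degree r"
proof (rule ccontr)
  assume "\<not> 2 \<le> degree r"
  hence d: "degree r \<le> 1" by simp
  show False
  proof (cases "degree r = 0")
    case True thus False using const_no_root r by blast
  next
    case False
    hence "degree r = 1" using d by simp
    hence c1: "coeff r 1 \<noteq> 0" using r by (metis leading_coeff_0_iff)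
    have "emb (coeff r 0) + emb (coeff r 1) * \<beta> = 0" using r poly_M_le1[OF d] by simp
    hence "\<beta> = emb (- coeff r 0 / coeff r 1)" using c1 by (simp add: field_simps eq_neg_iff_add_eq_0 add.commute)
    hence "\<exists>c. \<beta> = emb c" by blast
    then obtain c where "\<beta> = emb c" by blast
    hence "\<beta> \<in> E" by simp
    thus False using b by simp
  qed
qed

lemma frob_sq: "(x :: 'b) ^ (q * q) = x"
  using ff_power_card[of x] ext by (simp add: power2_eq_square)

lemma E_trace: "x + x ^ q \<in> E"
  by (simp add: E_iff frob_add flip: power_mult) (simp add: frob_sq)

lemma E_norm: "x ^ (q + 1) \<in> E"
proof -
  have "(x ^ (q + 1)) ^ q = x ^ (q * q) * x ^ q"
    by (simp flip: power_mult power_add add: algebra_simps)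
  thus ?thesis by (simp add: E_iff frob_sq)
qed

lemma E_norm': "x * x ^ q \<in> E" using E_norm[of x] by simp

lemma M_pCons [simp]: "M (pCons a p) = pCons (emb a) (M p)"
  by (rule poly_eqI) (simp add: coeff_pCons split: nat.split)

definition Qp :: "'b \<Rightarrow> 'a poly" where
  "Qp b = [: embi (b ^ (q + 1)), - embi (b + b ^ q), 1 :]"

lemma coeff_Qp: "coeff (Qp b) 0 = embi (b ^ (q + 1))" "coeff (Qp b) 1 = - embi (b + b ^ q)"
  "coeff (Qp b) 2 = 1"
  by (simp_all add: Qp_def numeral_2_eq_2)

lemma degree_Qp: "degree (Qp b) = 2" and Qp_nz: "Qp b \<noteq> 0"
  by (auto simp: Qp_def numeral_2_eq_2)

lemma poly_M_Qp: "poly (M (Qp b)) x = b ^ (q + 1) - (b + b ^ q) * x + x ^ 2"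
  by (simp add: Qp_def E_trace E_norm E_norm' algebra_simps power2_eq_square)

lemma Qp_root1: "poly (M (Qp b)) b = 0"
  by (simp add: poly_M_Qp algebra_simps power2_eq_square)

lemma Qp_root2: "poly (M (Qp b)) (b ^ q) = 0"
  by (simp add: poly_M_Qp algebra_simps power2_eq_square flip: power_add)

lemma min_poly_quad:
  assumes b: "\<beta> \<notin> E"
  shows "min_poly emb \<beta> = Qp \<beta>"
  unfolding min_poly_def
proof (rule the_equality, intro conjI allI impI)
  show "lead_coeff (Qp \<beta>) = 1" by (simp add: degree_Qp coeff_Qp)
  show "poly (M (Qp \<beta>)) \<beta> = 0" by (rule Qp_root1)
  fix r assume "r \<noteq> 0 \<and> poly (M r) \<beta> = 0"
  thus "degree (Qp \<beta>) \<le> degree r" using notE_deg[OF b] by (simp add: degree_Qp)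
next
  fix p assume p: "lead_coeff p = 1 \<and> poly (M p) \<beta> = 0 \<and>
      (\<forall>r. r \<noteq> 0 \<and> poly (M r) \<beta> = 0 \<longrightarrow> degree p \<le> degree r)"
  have p0: "p \<noteq> 0" using p by auto
  have "degree p \<le> 2" using p Qp_nz[of \<beta>] Qp_root1[of \<beta>] by (auto simp: degree_Qp)
  moreover have "2 \<le> degree p" using notE_deg[OF b p0] p by simp
  ultimately have dp: "degree p = 2" by simp
  have c2: "coeff p 2 = 1" using p dp by simp
  have e1: "emb (coeff p 0) + emb (coeff p 1) * \<beta> + \<beta> ^ 2 = 0"
    using p poly_M_le2[of p \<beta>] dp c2 by simp
  have e2: "emb (coeff (Qp \<beta>) 0) + emb (coeff (Qp \<beta>) 1) * \<beta> + \<beta> ^ 2 = 0"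
    using Qp_root1[of \<beta>] poly_M_le2[of "Qp \<beta>" \<beta>] by (simp add: degree_Qp coeff_Qp(3))
  have "emb (coeff p 0 - coeff (Qp \<beta>) 0) + emb (coeff p 1 - coeff (Qp \<beta>) 1) * \<beta> =
     (emb (coeff p 0) + emb (coeff p 1) * \<beta> + \<beta> ^ 2) -
     (emb (coeff (Qp \<beta>) 0) + emb (coeff (Qp \<beta>) 1) * \<beta> + \<beta> ^ 2)"
    by (simp add: algebra_simps)
  also have "\<dots> = 0" using e1 e2 by (simp only: diff_self diff_zero)
  finally have e3: "emb (coeff p 0 - coeff (Qp \<beta>) 0) + emb (coeff p 1 - coeff (Qp \<beta>) 1) * \<beta> = 0" .
  have c1: "coeff p 1 = coeff (Qp \<beta>) 1"
  proof (rule ccontr)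
    assume "coeff p 1 \<noteq> coeff (Qp \<beta>) 1"
    hence nz: "coeff p 1 - coeff (Qp \<beta>) 1 \<noteq> 0" by simp
    have "\<beta> = emb (- (coeff p 0 - coeff (Qp \<beta>) 0) / (coeff p 1 - coeff (Qp \<beta>) 1))"
      using e3 nz by (simp add: field_simps eq_neg_iff_add_eq_0 add.commute)
    hence "\<exists>c. \<beta> = emb c" by blast
    then obtain c where "\<beta> = emb c" by blast
    hence "\<beta> \<in> E" by simp
    thus False using b by simp
  qed
  have c0: "coeff p 0 = coeff (Qp \<beta>) 0" using e3 c1 by simp
  show "p = Qp \<beta>"
  proof (rule poly_eqI)
    fix i
    show "coeff p i = coeff (Qp \<beta>) i"
    proof (cases "i \<le> 2")
      case True
      hence "i = 0 \<or> i = 1 \<or> i = 2" by auto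
      thus ?thesis using c0 c1 c2 coeff_Qp by auto
    next
      case False
      thus ?thesis using dp degree_Qp[of \<beta>] by (simp add: coeff_eq_0)
    qed
  qed
qed

lemma min_poly_lin:
  assumes b: "\<beta> \<in> E"
  shows "min_poly emb \<beta> = [: - embi \<beta>, 1 :]"
  unfolding min_poly_def
proof (rule the_equality, intro conjI allI impI)
  show "lead_coeff [: - embi \<beta>, 1 :] = 1" by simp
  show "poly (M [: - embi \<beta>, 1 :]) \<beta> = 0" using b by (simp add: map_poly_pCons)
  fix r assume "r \<noteq> 0 \<and> poly (M r) \<beta> = 0"
  thus "degree [: - embi \<beta>, 1 :] \<le> degree r" using const_no_root by fastforce
next
  fix p assume p: "lead_coeff p = 1 \<and> poly (M p) \<beta> = 0 \<and>
      (\<forall>r. r \<noteq> 0 \<and> poly (M r) \<beta> = 0 \<longrightarrow> degree p \<le> degree r)"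
  have p0: "p \<noteq> 0" using p by auto
  have r0: "poly (M [: - embi \<beta>, 1 :]) \<beta> = 0" using b by (simp add: map_poly_pCons)
  have r1: "[: - embi \<beta>, 1 :] \<noteq> 0" by simp
  have "degree p \<le> degree [: - embi \<beta>, 1 :]"
    using p[THEN conjunct2, THEN conjunct2, rule_format, OF conjI[OF r1 r0]] .
  hence "degree p \<le> 1" by simp
  moreover have "degree p \<noteq> 0" using const_no_root[OF p0] p by blast
  ultimately have dp: "degree p = 1" by simp
  have c1: "coeff p (Suc 0) = 1" using p dp by simp
  have pr: "poly (M p) \<beta> = 0" using p by simp
  have "emb (coeff p 0) + \<beta> = 0" using pr poly_M_le1[of p \<beta>] dp c1 by simp
  hence "emb (coeff p 0) = emb (- embi \<beta>)" using b by (simp add: eq_neg_iff_add_eq_0)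
  hence c0: "coeff p 0 = - embi \<beta>" by (simp only: emb_eq_iff)
  show "p = [: - embi \<beta>, 1 :]"
  proof (rule poly_eqI)
    fix i
    show "coeff p i = coeff [: - embi \<beta>, 1 :] i"
      using c0 c1 dp by (cases i) (auto simp: coeff_eq_0 coeff_pCons split: nat.split)
  qed
qed

end

context ccode
begin

definition T :: "'b \<Rightarrow> 'b" where "T y = y + y ^ q"

lemma T_add: "T (x + y) = T x + T y"
  unfolding T_def by (simp add: frob_add algebra_simps)

lemma T_0 [simp]: "T 0 = 0"
  unfolding T_def using q_ge2 by (simp add: zero_power)

lemma T_E [simp]: "T y \<in> E"
  unfolding T_def by (rule E_trace)

lemma T_scale: "a \<in> E \<Longrightarrow> T (a * y) = a * T y"
  unfolding T_def by (simp add: E_iff power_mult_distrib algebra_simps)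

lemma T_diff: "T (x - y) = T x - T y"
  using T_add[of "x - y" y] by simp

lemma card_ker_T: "card {z. T z = 0} \<le> q"
proof -
  define P :: "'b poly" where "P = monom 1 q + [:0, 1:]"
  have degP: "degree P = q" unfolding P_def using q_ge2
    by (subst degree_add_eq_left) (auto simp: degree_monom_eq)
  hence P0: "P \<noteq> 0" using q_ge2 by auto
  have "{z. T z = 0} = {x. poly P x = 0}" unfolding P_def T_def
    by (auto simp: poly_monom algebra_simps)
  thus ?thesis using card_poly_roots_bound[OF P0] degP by simp
qed

lemma fiber_T:
  assumes c: "c \<in> E"
  shows "card {z. T z = c} = q"
proof -
  define K0 where "K0 = {z. T z = 0}"
  define I where "I = range T"
  have IE: "I \<subseteq> E" unfolding I_def by auto
  have cardI: "card I \<le> q" using card_mono[OF _ IE] card_E by simp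
  have fib: "card {z. T z = d} = card K0" if dI: "d \<in> I" for d
  proof -
    have "d \<in> range T" using dI by (simp add: I_def)
    then obtain z0 where z0: "T z0 = d" by blast
    have "{z. T z = d} = (\<lambda>z. z + z0) ` K0"
    proof (rule set_eqI, rule iffI)
      fix z assume "z \<in> {z. T z = d}"
      hence "T (z - z0) = 0" using z0 by (simp add: T_diff)
      thus "z \<in> (\<lambda>z. z + z0) ` K0" unfolding K0_def by (auto intro!: image_eqI[of _ _ "z - z0"])
    next
      fix z assume "z \<in> (\<lambda>z. z + z0) ` K0"
      thus "z \<in> {z. T z = d}" using z0 unfolding K0_def by (auto simp: T_add)
    qed
    moreover have "inj_on (\<lambda>z. z + z0) K0" by (auto simp: inj_on_def)
    ultimately show ?thesis by (simp add: card_image)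
  qed
  have U: "(\<Union>d\<in>I. {z. T z = d}) = UNIV" unfolding I_def by auto
  have "CARD('b) = card (\<Union>d\<in>I. {z. T z = d})" by (simp only: U)
  also have "\<dots> = (\<Sum>d\<in>I. card {z. T z = d})"
    by (rule card_UN_disjoint) auto
  also have "\<dots> = card I * card K0" using fib by simp
  finally have prod: "q * q = card I * card K0" using ext by (simp add: power2_eq_square)
  have cK: "card K0 \<le> q" unfolding K0_def by (rule card_ker_T)
  have "card I = q"
  proof (rule ccontr)
    assume "card I \<noteq> q" hence "card I < q" using cardI by simp
    have "card I * card K0 \<le> card I * q" by (rule mult_le_mono2[OF cK])
    also have "\<dots> < q * q" using \<open>card I < q\<close> q_ge2 by simp
    finally have "card I * card K0 < q * q" .
    thus False using prod by simp
  qed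
  hence "card K0 = q" using prod q_ge2 by simp
  moreover have "I = E" using \<open>card I = q\<close> IE card_E by (intro card_subset_eq) auto
  ultimately show ?thesis using fib c by simp
qed

lemma T_surj: "\<exists>y. T y = 1"
proof -
  have "card {z. T z = 1} = q" by (rule fiber_T) simp
  have "{z. T z = 1} \<noteq> {}"
  proof
    assume "{z. T z = 1} = {}"
    hence "card {z. T z = 1} = 0" by (simp only: card.empty)
    thus False using \<open>card {z. T z = 1} = q\<close> q_ge2 by simp
  qed
  thus ?thesis by auto
qed

end

context ccode
begin

definition f :: int where "f = e2 - (int q + 1) * e1"
definition \<zeta> :: 'b where "\<zeta> = \<gamma> powi ((int q + 1) * e1)"
definition \<delta> :: 'b where "\<delta> = \<gamma> powi e2"
definition \<rho> :: 'b where "\<rho> = \<gamma> powi f"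

lemma int_n: "int n = (int q + 1) * (int q - 1)"
proof -
  have "1 \<le> q ^ 2" using q_ge2 by simp
  hence "int n = int q ^ 2 - 1" unfolding n_def by (simp add: of_nat_diff)
  thus ?thesis by (simp add: power2_eq_square algebra_simps)
qed

lemma zeta_nz [simp]: "\<zeta> \<noteq> 0" and delta_nz [simp]: "\<delta> \<noteq> 0" and rho_nz [simp]: "\<rho> \<noteq> 0"
  unfolding \<zeta>_def \<delta>_def \<rho>_def by simp_all

lemma delta_eq: "\<delta> = \<zeta> * \<rho>"
proof -
  have "e2 = (int q + 1) * e1 + f" unfolding f_def by simp
  hence "\<delta> = \<gamma> powi ((int q + 1) * e1 + f)" unfolding \<delta>_def by simp
  also have "\<dots> = \<zeta> * \<rho>" unfolding \<zeta>_def \<rho>_def by (rule power_int_add) simp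
  finally show ?thesis .
qed

lemma coprime_f: "coprime f (int n)"
proof -
  have a: "f = (- e1) * (int q + 1) + e2" unfolding f_def by (simp add: algebra_simps)
  have "gcd (int q + 1) f = gcd (int q + 1) e2" unfolding a by (rule gcd_add_mult)
  hence c1: "coprime (int q + 1) f" using g2 by (simp add: coprime_iff_gcd_eq_1)
  have b: "f = (- e1) * (int q - 1) + (- (2 * e1 - e2))" unfolding f_def by (simp add: algebra_simps)
  have "gcd (int q - 1) f = gcd (int q - 1) (- (2 * e1 - e2))" unfolding b by (rule gcd_add_mult)
  hence c2: "coprime (int q - 1) f" using g1 gcd_neg2[of "int q - 1" "2 * e1 - e2"] by (simp add: coprime_iff_gcd_eq_1)
  show ?thesis using c1 c2 unfolding int_n by (simp add: coprime_commute)
qed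

lemma rho_pow_eq_1: "\<rho> ^ k = 1 \<longleftrightarrow> n dvd k"
proof -
  have "\<rho> ^ k = \<gamma> powi (f * int k)" unfolding \<rho>_def by (simp add: power_int_mult)
  also have "\<dots> = 1 \<longleftrightarrow> int n dvd f * int k" by (rule gamma_powi_eq_1)
  also have "\<dots> \<longleftrightarrow> int n dvd int k"
    using coprime_f by (simp add: coprime_dvd_mult_right_iff coprime_commute)
  finally show ?thesis by simp
qed

lemma rho_inj: "inj_on (\<lambda>i. \<rho> ^ i) {..<n}"
proof (rule inj_onI)
  have main: "i = j" if h: "i < n" "j < n" "i \<le> j" "\<rho> ^ i = \<rho> ^ j" for i j
  proof -
    have "\<rho> ^ j = \<rho> ^ i * \<rho> ^ (j - i)" using h(3) by (simp flip: power_add)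
    hence "\<rho> ^ (j - i) = 1" using h(4) by simp
    hence "n dvd (j - i)" by (simp add: rho_pow_eq_1)
    moreover have "j - i < n" using h by simp
    ultimately have "j - i = 0" by (metis dvd_imp_le neq0_conv not_less)
    thus ?thesis using h(3) by simp
  qed
  fix i j assume "i \<in> {..<n}" "j \<in> {..<n}" "\<rho> ^ i = \<rho> ^ j"
  thus "i = j" using main[of i j] main[of j i] by (cases "i \<le> j") auto
qed

lemma rho_img: "(\<lambda>i. \<rho> ^ i) ` {..<n} = UNIV - {0}"
proof -
  have "(\<lambda>i. \<rho> ^ i) ` {..<n} \<subseteq> UNIV - {0}" by auto
  moreover have "card ((\<lambda>i. \<rho> ^ i) ` {..<n}) = card (UNIV - {0::'b})"
    using card_image[OF rho_inj] card_units by simp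
  ultimately show ?thesis by (intro card_subset_eq) auto
qed

lemma zeta_E: "\<zeta> \<in> E"
proof -
  have "\<zeta> ^ (q - 1) = \<gamma> powi ((int q + 1) * e1 * int (q - 1))"
    unfolding \<zeta>_def by (simp add: power_int_mult)
  also have "(int q + 1) * e1 * int (q - 1) = int n * e1"
    using q_ge2 by (simp add: int_n of_nat_diff algebra_simps)
  also have "\<gamma> powi (int n * e1) = 1" by (simp add: gamma_powi_eq_1)
  finally have "\<zeta> ^ (q - 1) = 1" .
  hence "\<zeta> ^ Suc (q - 1) = \<zeta>" by simp
  thus ?thesis using q_ge2 by (simp add: E_iff)
qed

lemma delta_notE: "\<delta> \<notin> E"
proof
  assume "\<delta> \<in> E"
  hence "\<delta> ^ Suc (q - 1) = \<delta>" using q_ge2 by (simp add: E_iff)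
  hence "\<delta> ^ (q - 1) = 1" by simp
  moreover have "\<delta> ^ (q - 1) = \<gamma> powi (e2 * int (q - 1))"
    unfolding \<delta>_def by (simp add: power_int_mult)
  ultimately have "int n dvd e2 * int (q - 1)" by (simp add: gamma_powi_eq_1)
  hence "(int q + 1) * (int q - 1) dvd e2 * (int q - 1)"
    using q_ge2 by (simp add: int_n of_nat_diff)
  moreover have "int q - 1 \<noteq> 0" using q_ge2 by simp
  ultimately have d: "int q + 1 dvd e2" by simp
  have "int q + 1 dvd gcd (int q + 1) e2" using d by simp
  hence "int q + 1 dvd 1" using g2 by simp
  hence "int q + 1 \<le> 1" by (simp add: zdvd_imp_le)
  thus False using q_ge2 by simp
qed

lemma inv_zeta_E: "inverse \<zeta> \<in> E" using zeta_E by (rule E_inverse)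

lemma inv_delta_notE: "inverse \<delta> \<notin> E"
  using E_inverse[of "inverse \<delta>"] delta_notE by auto

definition ev :: "'a \<Rightarrow> 'b \<Rightarrow> nat \<Rightarrow> 'b" where
  "ev u v i = emb u * \<zeta> ^ i + T (v * \<delta> ^ i)"

lemma ev_E: "ev u v i \<in> E"
  unfolding ev_def by (intro E_add E_mult E_power zeta_E) auto

lemma ev_alt: "ev u v i = \<zeta> ^ i * (emb u + T (v * \<rho> ^ i))"
proof -
  have "T (v * \<delta> ^ i) = T (\<zeta> ^ i * (v * \<rho> ^ i))"
    by (simp add: delta_eq power_mult_distrib algebra_simps)
  also have "\<dots> = \<zeta> ^ i * T (v * \<rho> ^ i)" by (intro T_scale E_power zeta_E)
  finally show ?thesis unfolding ev_def by (simp add: algebra_simps)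
qed

lemma ev_zero_iff: "ev u v i = 0 \<longleftrightarrow> T (v * \<rho> ^ i) = - emb u"
  by (simp add: ev_alt eq_neg_iff_add_eq_0 add.commute)

lemma ev_diff: "ev (u - u') (v - v') i = ev u v i - ev u' v' i"
  unfolding ev_def by (simp add: algebra_simps T_diff flip: T_add)

definition word :: "'a \<Rightarrow> 'b \<Rightarrow> 'a poly" where
  "word u v = (\<Sum>i<n. monom (embi (ev u v i)) i)"

lemma coeff_word: "coeff (word u v) i = (if i < n then embi (ev u v i) else 0)"
  unfolding word_def coeff_sum by (simp add: coeff_monom)

lemma emb_coeff_word: "i < n \<Longrightarrow> emb (coeff (word u v) i) = ev u v i"
  by (simp add: coeff_word ev_E)

lemma degree_word: "degree (word u v) < n"
proof -
  have "degree (word u v) \<le> n - 1"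
    by (rule degree_le) (auto simp: coeff_word)
  thus ?thesis using n_pos by simp
qed

lemma word_coeff_nz_iff: "i < n \<Longrightarrow> coeff (word u v) i \<noteq> 0 \<longleftrightarrow> ev u v i \<noteq> 0"
  using emb_coeff_word[of i u v] by (metis emb_eq_0_iff)

lemma wt_word: "hamming_wt n (word u v) = card {i. i < n \<and> ev u v i \<noteq> 0}"
  unfolding hamming_wt_def using word_coeff_nz_iff by (metis (lifting))

lemma zeros_eq: "card {i. i < n \<and> ev u v i = 0} = card {y. y \<noteq> 0 \<and> T (v * y) = - emb u}"
proof -
  have eq: "(\<lambda>i. \<rho> ^ i) ` {i. i < n \<and> ev u v i = 0} = {y. y \<noteq> 0 \<and> T (v * y) = - emb u}"
  proof (rule set_eqI, rule iffI)
    fix y assume "y \<in> (\<lambda>i. \<rho> ^ i) ` {i. i < n \<and> ev u v i = 0}"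
    thus "y \<in> {y. y \<noteq> 0 \<and> T (v * y) = - emb u}" by (auto simp: ev_zero_iff)
  next
    fix y assume y: "y \<in> {y. y \<noteq> 0 \<and> T (v * y) = - emb u}"
    hence "y \<in> (\<lambda>i. \<rho> ^ i) ` {..<n}" using rho_img by auto
    then obtain i where "i < n" "y = \<rho> ^ i" by auto
    thus "y \<in> (\<lambda>i. \<rho> ^ i) ` {i. i < n \<and> ev u v i = 0}" using y by (auto simp: ev_zero_iff)
  qed
  have "inj_on (\<lambda>i. \<rho> ^ i) {i. i < n \<and> ev u v i = 0}"
    by (rule inj_on_subset[OF rho_inj]) auto
  hence "card ((\<lambda>i. \<rho> ^ i) ` {i. i < n \<and> ev u v i = 0}) = card {i. i < n \<and> ev u v i = 0}"
    by (rule card_image)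
  thus ?thesis unfolding eq by simp
qed

lemma card_nz: "card {y :: 'b. y \<noteq> 0} = n"
proof -
  have "{y :: 'b. y \<noteq> 0} = UNIV - {0}" by auto
  thus ?thesis using card_units by simp
qed

lemma count_T:
  assumes c: "c \<in> E"
  shows "card {y. y \<noteq> 0 \<and> T (v * y) = c} =
    (if v = 0 then (if c = 0 then n else 0) else (if c = 0 then q - 1 else q))"
proof (cases "v = 0")
  case True
  thus ?thesis by (cases "c = 0") (auto simp: card_nz)
next
  case False
  have eq: "{y. y \<noteq> 0 \<and> T (v * y) = c} = (\<lambda>z. z / v) ` {z. z \<noteq> 0 \<and> T z = c}"
  proof (rule set_eqI, rule iffI)
    fix y assume "y \<in> {y. y \<noteq> 0 \<and> T (v * y) = c}"
    thus "y \<in> (\<lambda>z. z / v) ` {z. z \<noteq> 0 \<and> T z = c}" using False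
      by (auto intro!: image_eqI[of _ _ "v * y"])
  qed (use False in auto)
  have inj: "inj_on (\<lambda>z. z / v) {z. z \<noteq> 0 \<and> T z = c}" using False by (auto simp: inj_on_def)
  have "card {z. z \<noteq> 0 \<and> T z = c} = (if c = 0 then q - 1 else q)"
  proof (cases "c = 0")
    case True
    have "{z. z \<noteq> 0 \<and> T z = c} = {z. T z = c} - {0}" using True by auto
    thus ?thesis using fiber_T[OF c] True by (simp add: card_Diff_singleton)
  next
    case False
    have "{z. z \<noteq> 0 \<and> T z = c} = {z. T z = c}" using False by auto
    thus ?thesis using fiber_T[OF c] False by simp
  qed
  thus ?thesis using eq card_image[OF inj] False by simp
qed

lemma wt_word_formula: "hamming_wt n (word u v) =
   (if v = 0 then (if u = 0 then 0 else n) else (if u = 0 then n + 1 - q else n - q))"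
proof -
  have split: "{..<n} = {i. i < n \<and> ev u v i \<noteq> 0} \<union> {i. i < n \<and> ev u v i = 0}" by auto
  have "n = card {i. i < n \<and> ev u v i \<noteq> 0} + card {i. i < n \<and> ev u v i = 0}"
    using card_Un_disjoint[of "{i. i < n \<and> ev u v i \<noteq> 0}" "{i. i < n \<and> ev u v i = 0}"]
    by (simp flip: split) blast
  hence "hamming_wt n (word u v) = n - card {y. y \<noteq> 0 \<and> T (v * y) = - emb u}"
    by (simp add: wt_word zeros_eq)
  also have "\<dots> = n - (if v = 0 then (if - emb u = 0 then n else 0) else (if - emb u = 0 then q - 1 else q))"
    by (subst count_T) (auto intro: E_minus)
  finally show ?thesis using q_ge2 by auto
qed

end

context ccode
begin

lemma embi_0 [simp]: "embi 0 = 0" using embi_emb[of 0] by simp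

definition G :: "'b \<Rightarrow> 'b" where "G y = (\<Sum>i<n. y ^ i)"

lemma G_zero: "y ^ n = 1 \<Longrightarrow> y \<noteq> 1 \<Longrightarrow> G y = 0"
  unfolding G_def by (simp add: sum_gp_strict)

lemma poly_word: "poly (M (word u v)) x = emb u * G (\<zeta> * x) + v * G (\<delta> * x) + v ^ q * G (\<delta> ^ q * x)"
proof -
  have "poly (M (word u v)) x = (\<Sum>i<n. emb (coeff (word u v) i) * x ^ i)"
    by (rule poly_M[OF degree_word])
  also have "\<dots> = (\<Sum>i<n. emb u * (\<zeta> * x) ^ i + v * (\<delta> * x) ^ i + v ^ q * (\<delta> ^ q * x) ^ i)"
  proof (rule sum.cong[OF refl])
    fix i assume "i \<in> {..<n}"
    hence "emb (coeff (word u v) i) = ev u v i" by (simp add: emb_coeff_word)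
    moreover have "(\<delta> ^ i) ^ q = (\<delta> ^ q) ^ i" by (simp flip: power_mult add: mult.commute)
    ultimately show "emb (coeff (word u v) i) * x ^ i =
        emb u * (\<zeta> * x) ^ i + v * (\<delta> * x) ^ i + v ^ q * (\<delta> ^ q * x) ^ i"
      unfolding ev_def T_def by (simp add: power_mult_distrib algebra_simps)
  qed
  also have "\<dots> = emb u * G (\<zeta> * x) + v * G (\<delta> * x) + v ^ q * G (\<delta> ^ q * x)"
    unfolding G_def by (simp add: sum.distrib sum_distrib_left)
  finally show ?thesis .
qed

lemma word_eval_nz:
  assumes x: "x \<noteq> 0" and nz: "poly (M (word u v)) x \<noteq> 0"
  shows "(u \<noteq> 0 \<and> x = inverse \<zeta>) \<or> (v \<noteq> 0 \<and> (x = inverse \<delta> \<or> x = inverse \<delta> ^ q))"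
proof (rule ccontr)
  assume h: "\<not> ?thesis"
  have a: "emb u * G (\<zeta> * x) = 0"
  proof (cases "u = 0")
    case False
    hence "\<zeta> * x \<noteq> 1" using h x by (auto simp: field_simps)
    thus ?thesis using x by (simp add: G_zero unit_pow_n)
  qed simp
  have b: "v * G (\<delta> * x) = 0"
  proof (cases "v = 0")
    case False
    hence "\<delta> * x \<noteq> 1" using h x by (auto simp: field_simps)
    thus ?thesis using x by (simp add: G_zero unit_pow_n)
  qed simp
  have c: "v ^ q * G (\<delta> ^ q * x) = 0"
  proof (cases "v = 0")
    case False
    have "x \<noteq> inverse (\<delta> ^ q)" using h False by (simp add: power_inverse)
    hence "\<delta> ^ q * x \<noteq> 1" using x by (auto simp: field_simps)
    thus ?thesis using x by (simp add: G_zero unit_pow_n)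
  qed (use q_ge2 in \<open>simp add: zero_power\<close>)
  show False using nz a b c by (simp add: poly_word)
qed

definition h1 :: "'a poly" where "h1 = [: - embi (inverse \<zeta>), 1 :]"
definition h2 :: "'a poly" where "h2 = Qp (inverse \<delta>)"

lemma h1_eq: "min_poly emb (\<gamma> powi (- ((int q + 1) * e1))) = h1"
  unfolding h1_def power_int_minus \<zeta>_def[symmetric] by (rule min_poly_lin[OF inv_zeta_E])

lemma h2_eq: "min_poly emb (\<gamma> powi (- e2)) = h2"
  unfolding h2_def power_int_minus \<delta>_def[symmetric] by (rule min_poly_quad[OF inv_delta_notE])

lemma degree_h1: "degree h1 = 1" and degree_h2: "degree h2 = 2"
  by (simp_all add: h1_def h2_def degree_Qp)

lemma h1_nz: "h1 \<noteq> 0" and h2_nz: "h2 \<noteq> 0"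
  by (simp_all add: h1_def h2_def Qp_nz)

lemma poly_M_h1: "poly (M h1) x = x - inverse \<zeta>"
  by (simp add: h1_def inv_zeta_E)

lemma h2_roots: "poly (M h2) (inverse \<delta>) = 0" "poly (M h2) (inverse \<delta> ^ q) = 0"
  unfolding h2_def by (rule Qp_root1, rule Qp_root2)

lemma inv_delta_q_notE: "inverse \<delta> ^ q \<notin> E"
proof
  assume "inverse \<delta> ^ q \<in> E"
  hence "(inverse \<delta> ^ q) ^ q = inverse \<delta> ^ q" by (simp add: E_iff)
  hence "inverse \<delta> = inverse \<delta> ^ q" by (simp add: frob_sq flip: power_mult)
  hence "inverse \<delta> \<in> E" by (simp add: E_iff)
  thus False using inv_delta_notE by simp
qed

lemma inv_delta_q_ne: "inverse \<delta> ^ q \<noteq> inverse \<delta>"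
  using inv_delta_notE by (auto simp: E_iff)

lemma roots_distinct: "inverse \<zeta> \<noteq> inverse \<delta>" "inverse \<zeta> \<noteq> inverse \<delta> ^ q"
  using inv_zeta_E inv_delta_notE inv_delta_q_notE by auto

lemma h1_dvd: "h1 dvd Xn"
  by (rule dvd_Xn[OF h1_nz, of "{inverse \<zeta>}"]) (auto simp: degree_h1 poly_M_h1)

lemma h2_dvd: "h2 dvd Xn"
  by (rule dvd_Xn[OF h2_nz, of "{inverse \<delta>, inverse \<delta> ^ q}"])
     (use inv_delta_q_ne h2_roots in \<open>auto simp: degree_h2\<close>)

lemma h12_dvd: "h1 * h2 dvd Xn"
  by (rule dvd_Xn[of _ "{inverse \<zeta>, inverse \<delta>, inverse \<delta> ^ q}"])
     (use inv_delta_q_ne h2_roots roots_distinct h1_nz h2_nz in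
       \<open>auto simp: degree_h2 degree_h1 degree_mult_eq poly_M_h1\<close>)

lemma code_mem:
  assumes H: "H \<noteq> 0" "H dvd Xn" and c: "degree c < n"
    and ev: "\<And>x. x \<noteq> 0 \<Longrightarrow> poly (M c) x * poly (M H) x = 0"
  shows "c \<in> cyclic_code_pc n H"
proof -
  obtain g where g: "Xn = H * g" using H(2) by (auto simp: dvd_def)
  have gdef: "(monom 1 n - 1) div H = g" using H(1) g unfolding Xn_def by simp
  have "Xn dvd c * H" by (rule Xn_dvd) (use ev in simp)
  then obtain k where "c * H = Xn * k" by (auto simp: dvd_def)
  hence "c * H = (g * k) * H" using g by (simp add: algebra_simps)
  hence "c = g * k" using H(1) by simp
  thus ?thesis unfolding cyclic_code_pc_def gdef using c by auto
qed

lemma code_card: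
  assumes H: "H \<noteq> 0" "H dvd Xn"
  shows "card (cyclic_code_pc n H) = q ^ degree H"
proof -
  obtain g where g: "Xn = H * g" using H(2) by (auto simp: dvd_def)
  have gdef: "(monom 1 n - 1) div H = g" using H(1) g unfolding Xn_def by simp
  have g0: "g \<noteq> 0" using g Xn_nz by auto
  have dg: "degree g + degree H = n" using g degree_Xn H(1) g0 by (simp add: degree_mult_eq)
  have "card (cyclic_code_pc n H) = q ^ (n - degree g)"
    unfolding cyclic_code_pc_def gdef using g0 dg by (intro mult_card) auto
  moreover have "n - degree g = degree H" using dg by linarith
  ultimately show ?thesis by simp
qed

lemma code_linear: "is_linear_code n (cyclic_code_pc n H)"
  unfolding is_linear_code_def cyclic_code_pc_def using n_pos
  by (auto intro: degree_add_less dvd_add dvd_smult simp: degree_smult_le le_less_trans)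

lemma code_finite: "H \<noteq> 0 \<Longrightarrow> H dvd Xn \<Longrightarrow> finite (cyclic_code_pc n H)"
  using code_card[of H] q_ge2 by (intro card_ge_0_finite) simp

lemma word_00: "word 0 0 = 0"
  by (rule poly_eqI) (simp add: coeff_word ev_def)

lemma n_gt_q: "n > q"
proof -
  have "q * 2 \<le> q * q" using q_ge2 by (intro mult_le_mono2) simp
  hence "q + 1 < q * q" using q_ge2 by linarith
  thus ?thesis unfolding n_def by (simp add: power2_eq_square)
qed

lemma word_inj: "word u v = word u' v' \<Longrightarrow> u = u' \<and> v = v'"
proof -
  assume eq: "word u v = word u' v'"
  have "ev (u - u') (v - v') i = 0" if "i < n" for i
    using emb_coeff_word[OF that, of u v] emb_coeff_word[OF that, of u' v'] eq
    by (simp add: ev_diff)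
  hence "hamming_wt n (word (u - u') (v - v')) = 0" by (simp add: wt_word)
  hence "u - u' = 0 \<and> v - v' = 0" using n_gt_q n_pos
    unfolding wt_word_formula by (auto split: if_splits)
  thus ?thesis by simp
qed

lemma C12_eq: "cyclic_code_pc n (h1 * h2) = (\<lambda>(u, v). word u v) ` UNIV"
proof -
  have sub: "(\<lambda>(u, v). word u v) ` UNIV \<subseteq> cyclic_code_pc n (h1 * h2)"
  proof clarify
    fix u v
    show "word u v \<in> cyclic_code_pc n (h1 * h2)"
    proof (rule code_mem[OF _ h12_dvd degree_word])
      show "h1 * h2 \<noteq> 0" using h1_nz h2_nz by simp
      fix x :: 'b assume x: "x \<noteq> 0"
      show "poly (M (word u v)) x * poly (M (h1 * h2)) x = 0"
      proof (cases "poly (M (word u v)) x = 0")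
        case False
        from word_eval_nz[OF x False] show ?thesis
          using h2_roots by (auto simp: poly_M_h1)
      qed simp
    qed
  qed
  have inj: "inj_on (\<lambda>(u, v). word u v) UNIV"
    by (auto simp: inj_on_def dest: word_inj)
  have "card ((\<lambda>(u, v). word u v) ` (UNIV :: ('a \<times> 'b) set)) = q ^ 3"
    using card_image[OF inj] by (simp add: q_def ext numeral_3_eq_3 power2_eq_square)
  moreover have "card (cyclic_code_pc n (h1 * h2)) = q ^ 3"
    using code_card[OF _ h12_dvd] h1_nz h2_nz by (simp add: degree_mult_eq degree_h1 degree_h2 numeral_3_eq_3)
  ultimately show ?thesis using sub code_finite[OF _ h12_dvd] h1_nz h2_nz
    by (intro card_subset_eq[symmetric]) auto
qed

lemma C1_eq: "cyclic_code_pc n h1 = (\<lambda>u. word u 0) ` UNIV"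
proof -
  have sub: "(\<lambda>u. word u 0) ` UNIV \<subseteq> cyclic_code_pc n h1"
  proof clarify
    fix u
    show "word u 0 \<in> cyclic_code_pc n h1"
    proof (rule code_mem[OF h1_nz h1_dvd degree_word])
      fix x :: 'b assume x: "x \<noteq> 0"
      show "poly (M (word u 0)) x * poly (M h1) x = 0"
      proof (cases "poly (M (word u 0)) x = 0")
        case False
        from word_eval_nz[OF x False] show ?thesis by (auto simp: poly_M_h1)
      qed simp
    qed
  qed
  have inj: "inj_on (\<lambda>u. word u 0) UNIV" by (auto simp: inj_on_def dest: word_inj)
  have "card ((\<lambda>u. word u 0) ` (UNIV :: 'a set)) = q ^ 1"
    using card_image[OF inj] by (simp add: q_def)
  moreover have "card (cyclic_code_pc n h1) = q ^ 1"
    using code_card[OF h1_nz h1_dvd] by (simp add: degree_h1)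
  ultimately show ?thesis using sub code_finite[OF h1_nz h1_dvd]
    by (intro card_subset_eq[symmetric]) auto
qed

lemma C2_eq: "cyclic_code_pc n h2 = (\<lambda>v. word 0 v) ` UNIV"
proof -
  have sub: "(\<lambda>v. word 0 v) ` UNIV \<subseteq> cyclic_code_pc n h2"
  proof clarify
    fix v
    show "word 0 v \<in> cyclic_code_pc n h2"
    proof (rule code_mem[OF h2_nz h2_dvd degree_word])
      fix x :: 'b assume x: "x \<noteq> 0"
      show "poly (M (word 0 v)) x * poly (M h2) x = 0"
      proof (cases "poly (M (word 0 v)) x = 0")
        case False
        from word_eval_nz[OF x False] show ?thesis using h2_roots by auto
      qed simp
    qed
  qed
  have inj: "inj_on (\<lambda>v. word 0 v) UNIV" by (auto simp: inj_on_def dest: word_inj)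
  have "card ((\<lambda>v. word 0 v) ` (UNIV :: 'b set)) = q ^ 2"
    using card_image[OF inj] by (simp add: ext)
  moreover have "card (cyclic_code_pc n h2) = q ^ 2"
    using code_card[OF h2_nz h2_dvd] by (simp add: degree_h2)
  ultimately show ?thesis using sub code_finite[OF h2_nz h2_dvd]
    by (intro card_subset_eq[symmetric]) auto
qed

end

context ccode
begin

lemma word_eq_0_iff: "word u v = 0 \<longleftrightarrow> u = 0 \<and> v = 0"
  using word_inj[of u v 0 0] word_00 by auto

lemma wt_values: "0 < n - q" "n - q < n + 1 - q" "n + 1 - q < n"
  using n_gt_q q_ge2 by auto

lemma nzw_C12: "nonzero_weights n (cyclic_code_pc n (h1 * h2)) = {n - q, n + 1 - q, n}"
proof -
  have "nonzero_weights n (cyclic_code_pc n (h1 * h2)) =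
      {hamming_wt n (word u v) | u v. \<not> (u = 0 \<and> v = 0)}"
  proof (rule set_eqI, rule iffI)
    fix w assume "w \<in> nonzero_weights n (cyclic_code_pc n (h1 * h2))"
    then obtain c where c: "w = hamming_wt n c" "c \<in> cyclic_code_pc n (h1 * h2)" "c \<noteq> 0"
      unfolding nonzero_weights_def by blast
    then obtain u v where uv: "c = word u v" unfolding C12_eq by auto
    hence "\<not> (u = 0 \<and> v = 0)" using c(3) by (auto simp: word_eq_0_iff)
    thus "w \<in> {hamming_wt n (word u v) | u v. \<not> (u = 0 \<and> v = 0)}" using c(1) uv by blast
  next
    fix w assume "w \<in> {hamming_wt n (word u v) | u v. \<not> (u = 0 \<and> v = 0)}"
    then obtain u v where uv: "w = hamming_wt n (word u v)" "\<not> (u = 0 \<and> v = 0)" by blast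
    have "word u v \<in> cyclic_code_pc n (h1 * h2)" unfolding C12_eq by auto
    moreover have "word u v \<noteq> 0" using uv(2) by (simp add: word_eq_0_iff)
    ultimately show "w \<in> nonzero_weights n (cyclic_code_pc n (h1 * h2))"
      unfolding nonzero_weights_def using uv(1) by blast
  qed
  also have "\<dots> = {n - q, n + 1 - q, n}"
  proof (rule set_eqI, rule iffI)
    fix w assume "w \<in> {hamming_wt n (word u v) | u v. \<not> (u = 0 \<and> v = 0)}"
    then obtain u v where "w = hamming_wt n (word u v)" "\<not> (u = 0 \<and> v = 0)" by blast
    thus "w \<in> {n - q, n + 1 - q, n}" by (auto simp: wt_word_formula)
  next
    fix w assume w: "w \<in> {n - q, n + 1 - q, n}"
    have a: "n - q = hamming_wt n (word 1 1) \<and> \<not> ((1::'a) = 0 \<and> (1::'b) = 0)"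
      by (simp add: wt_word_formula)
    have b: "n + 1 - q = hamming_wt n (word 0 1) \<and> \<not> ((0::'a) = 0 \<and> (1::'b) = 0)"
      by (simp add: wt_word_formula)
    have c: "n = hamming_wt n (word 1 0) \<and> \<not> ((1::'a) = 0 \<and> (0::'b) = 0)"
      by (simp add: wt_word_formula)
    have "n - q \<in> {hamming_wt n (word u v) | u v. \<not> (u = 0 \<and> v = 0)}" using a by blast
    moreover have "n + 1 - q \<in> {hamming_wt n (word u v) | u v. \<not> (u = 0 \<and> v = 0)}" using b by blast
    moreover have "n \<in> {hamming_wt n (word u v) | u v. \<not> (u = 0 \<and> v = 0)}" using c by blast
    ultimately show "w \<in> {hamming_wt n (word u v) | u v. \<not> (u = 0 \<and> v = 0)}" using w by blast
  qed
  finally show ?thesis .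
qed

lemma wf_C12: "weight_freq n (cyclic_code_pc n (h1 * h2)) w =
    card {(u, v). hamming_wt n (word u v) = w}"
proof -
  have "{c \<in> cyclic_code_pc n (h1 * h2). hamming_wt n c = w} =
      (\<lambda>(u, v). word u v) ` {(u, v). hamming_wt n (word u v) = w}"
    unfolding C12_eq by auto
  moreover have "inj_on (\<lambda>(u, v). word u v) {(u, v). hamming_wt n (word u v) = w}"
    by (auto simp: inj_on_def dest: word_inj)
  ultimately show ?thesis unfolding weight_freq_def by (simp add: card_image)
qed

lemma card_units_a: "card (UNIV - {0 :: 'a}) = q - 1"
  by (simp add: card_Diff_singleton q_def)

lemma wf_C12_0: "weight_freq n (cyclic_code_pc n (h1 * h2)) 0 = 1"
proof -
  have "{(u, v). hamming_wt n (word u v) = 0} = {(0, 0)}"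
    using wt_values n_pos by (auto simp: wt_word_formula split: if_splits)
  thus ?thesis by (simp add: wf_C12)
qed

lemma wf_C12_1: "weight_freq n (cyclic_code_pc n (h1 * h2)) (n - q) = (q - 1) * n"
proof -
  have "{(u, v). hamming_wt n (word u v) = n - q} = (UNIV - {0}) \<times> (UNIV - {0})"
    using wt_values by (auto simp: wt_word_formula split: if_splits)
  thus ?thesis by (simp add: wf_C12 card_cartesian_product card_units_a card_units)
qed

lemma wf_C12_2: "weight_freq n (cyclic_code_pc n (h1 * h2)) (n + 1 - q) = n"
proof -
  have "{(u, v). hamming_wt n (word u v) = n + 1 - q} = {0} \<times> (UNIV - {0})"
    using wt_values by (auto simp: wt_word_formula split: if_splits)
  thus ?thesis by (simp add: wf_C12 card_cartesian_product card_units)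
qed

lemma wf_C12_3: "weight_freq n (cyclic_code_pc n (h1 * h2)) n = q - 1"
proof -
  have "{(u, v). hamming_wt n (word u v) = n} = (UNIV - {0}) \<times> {0}"
    using wt_values by (auto simp: wt_word_formula split: if_splits)
  thus ?thesis by (simp add: wf_C12 card_cartesian_product card_units_a)
qed

lemma card_C12: "card (cyclic_code_pc n (h1 * h2)) = CARD('a) ^ 3"
proof -
  have "card (cyclic_code_pc n (h1 * h2)) = q ^ 3"
    using code_card[OF _ h12_dvd] h1_nz h2_nz by (simp add: degree_mult_eq degree_h1 degree_h2 numeral_3_eq_3)
  thus ?thesis by (simp only: q_def)
qed

lemma min_dist_C12: "min_dist n (cyclic_code_pc n (h1 * h2)) = n - q"
  unfolding min_dist_def nzw_C12 using wt_values by (simp add: Min_insert)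

lemma arith1: "n - q = q * (q - 1) - 1" "n + 1 - q = q * (q - 1)" "n = q ^ 2 - 1"
  unfolding n_def using q_ge2 by (auto simp: power2_eq_square algebra_simps diff_mult_distrib2)

lemma griesmer: "griesmer_optimal n 3 (q * (q - 1) - 1) TYPE('a)"
proof -
  define d where "d = q * (q - 1) - 1"
  have rd: "real d = real q ^ 2 - real q - 1"
  proof -
    have "q * (q - 1) \<ge> 1" using q_ge2 by (simp add: Suc_le_eq)
    hence "real d = real (q * (q - 1)) - 1" unfolding d_def by (simp add: of_nat_diff)
    thus ?thesis using q_ge2 by (simp add: of_nat_diff power2_eq_square algebra_simps)
  qed
  have q2: "real q \<ge> 2" using q_ge2 by simp
  have c0: "\<lceil>real d / real (q ^ 0)\<rceil> = int d" by simp
  have c1: "\<lceil>real d / real (q ^ 1)\<rceil> = int q - 1"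
  proof (rule ceiling_unique)
    have "real d / real q = real q - 1 - 1 / real q" using q2 rd
      by (simp add: field_simps power2_eq_square)
    moreover have "0 < 1 / real q" "1 / real q < 1" using q2 by auto
    ultimately show "real_of_int (int q - 1) - 1 < real d / real (q ^ 1)"
      "real d / real (q ^ 1) \<le> real_of_int (int q - 1)" by auto
  qed
  have c2: "\<lceil>real d / real (q ^ 2)\<rceil> = 1"
  proof (rule ceiling_unique)
    have pos: "real q ^ 2 > 0" using q2 by simp
    have "real q * real q \<ge> 2 * real q" using q2 by (intro mult_right_mono) auto
    moreover have "real d = real q * real q - real q - 1" using rd by (simp add: power2_eq_square)
    ultimately have "real d > 0" using q2 by linarith
    thus "real_of_int 1 - 1 < real d / real (q ^ 2)" using pos by simp
    have "real d \<le> real q ^ 2" using rd q2 by simp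
    thus "real d / real (q ^ 2) \<le> real_of_int 1" using pos by simp
  qed
  have "(\<Sum>i<3. \<lceil>real d / real (CARD('a) ^ i)\<rceil>) =
      \<lceil>real d / real (q ^ 0)\<rceil> + \<lceil>real d / real (q ^ 1)\<rceil> + \<lceil>real d / real (q ^ 2)\<rceil>"
    by (simp add: numeral_3_eq_3 q_def power2_eq_square)
  also have "\<dots> = int d + int q" using c0 c1 c2 by simp
  also have "\<dots> = int n"
  proof -
    have "d = n - q" unfolding d_def using arith1(1) by simp
    hence "d + q = n" using n_gt_q by simp
    thus ?thesis by (simp flip: of_nat_add)
  qed
  finally show ?thesis unfolding griesmer_optimal_def d_def by simp
qed

lemma nzw_C1: "nonzero_weights n (cyclic_code_pc n h1) = {n}"
  unfolding nonzero_weights_def C1_eq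
  by (auto simp: word_eq_0_iff wt_word_formula intro!: exI[of _ "word 1 0"])

lemma nzw_C2: "nonzero_weights n (cyclic_code_pc n h2) = {n + 1 - q}"
  unfolding nonzero_weights_def C2_eq
  by (auto simp: word_eq_0_iff wt_word_formula intro!: exI[of _ "word 0 1"])

lemma C1_ne_C2: "cyclic_code_pc n h1 \<noteq> cyclic_code_pc n h2"
proof
  assume "cyclic_code_pc n h1 = cyclic_code_pc n h2"
  hence "q ^ 1 = q ^ 2" using code_card[OF h1_nz h1_dvd] code_card[OF h2_nz h2_dvd]
    by (simp add: degree_h1 degree_h2)
  thus False using q_ge2 by (simp add: power2_eq_square)
qed

end

context ccode
begin

abbreviation Cc :: "'a poly set" where "Cc \<equiv> cyclic_code_pc n (h1 * h2)"
abbreviation D :: "'a poly set" where "D \<equiv> dual_code n Cc"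

lemma inner_word:
  assumes d: "degree d < n"
  shows "emb (\<Sum>i<n. coeff (word u v) i * coeff d i) =
    emb u * poly (M d) \<zeta> + v * poly (M d) \<delta> + v ^ q * poly (M d) (\<delta> ^ q)"
proof -
  have "emb (\<Sum>i<n. coeff (word u v) i * coeff d i) = (\<Sum>i<n. ev u v i * emb (coeff d i))"
    by (simp add: emb_coeff_word)
  also have "\<dots> = (\<Sum>i<n. emb u * (emb (coeff d i) * \<zeta> ^ i) + v * (emb (coeff d i) * \<delta> ^ i)
      + v ^ q * (emb (coeff d i) * (\<delta> ^ q) ^ i))"
  proof (rule sum.cong[OF refl])
    fix i
    have "(\<delta> ^ i) ^ q = (\<delta> ^ q) ^ i" by (simp flip: power_mult add: mult.commute)
    thus "ev u v i * emb (coeff d i) = emb u * (emb (coeff d i) * \<zeta> ^ i) +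
        v * (emb (coeff d i) * \<delta> ^ i) + v ^ q * (emb (coeff d i) * (\<delta> ^ q) ^ i)"
      unfolding ev_def T_def by (simp add: power_mult_distrib algebra_simps)
  qed
  also have "\<dots> = emb u * poly (M d) \<zeta> + v * poly (M d) \<delta> + v ^ q * poly (M d) (\<delta> ^ q)"
    by (simp add: poly_M[OF d] sum.distrib sum_distrib_left)
  finally show ?thesis .
qed

lemma poly_d_frob:
  assumes d: "degree d < n"
  shows "poly (M d) (x ^ q) = (poly (M d) x) ^ q"
proof -
  have "(poly (M d) x) ^ q = (\<Sum>i<n. (emb (coeff d i) * x ^ i) ^ q)"
    by (simp add: poly_M[OF d] frob_sum)
  also have "\<dots> = (\<Sum>i<n. emb (coeff d i) * (x ^ q) ^ i)"
    by (simp add: power_mult_distrib mult.commute flip: power_mult)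
  also have "\<dots> = poly (M d) (x ^ q)" by (simp add: poly_M[OF d])
  finally show ?thesis ..
qed

lemma D_iff: "d \<in> D \<longleftrightarrow> degree d < n \<and> poly (M d) \<zeta> = 0 \<and> poly (M d) \<delta> = 0"
proof
  assume "d \<in> D"
  hence d: "degree d < n" and orth: "\<And>c. c \<in> Cc \<Longrightarrow> (\<Sum>i<n. coeff c i * coeff d i) = 0"
    unfolding dual_code_def by auto
  have w: "emb u * poly (M d) \<zeta> + v * poly (M d) \<delta> + v ^ q * poly (M d) (\<delta> ^ q) = 0" for u v
  proof -
    have "word u v \<in> Cc" unfolding C12_eq by auto
    from orth[OF this] show ?thesis using inner_word[OF d, of u v] by simp
  qed
  have z: "poly (M d) \<zeta> = 0" using w[of 1 0] q_ge2 by (simp add: zero_power)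
  have "poly (M d) \<delta> = 0"
  proof (rule ccontr)
    assume y: "poly (M d) \<delta> \<noteq> 0"
    obtain t where t: "T t = 1" using T_surj by blast
    define v where "v = t / poly (M d) \<delta>"
    have "T (v * poly (M d) \<delta>) = 0"
      using w[of 0 v] unfolding T_def by (simp add: poly_d_frob[OF d] power_mult_distrib)
    moreover have "v * poly (M d) \<delta> = t" using y unfolding v_def by simp
    ultimately show False using t by simp
  qed
  thus "degree d < n \<and> poly (M d) \<zeta> = 0 \<and> poly (M d) \<delta> = 0" using d z by simp
next
  assume h: "degree d < n \<and> poly (M d) \<zeta> = 0 \<and> poly (M d) \<delta> = 0"
  have "(\<Sum>i<n. coeff c i * coeff d i) = 0" if "c \<in> Cc" for c
  proof -
    obtain u v where c: "c = word u v" using \<open>c \<in> Cc\<close> unfolding C12_eq by auto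
    have "emb (\<Sum>i<n. coeff c i * coeff d i) =
        emb u * poly (M d) \<zeta> + v * poly (M d) \<delta> + v ^ q * poly (M d) (\<delta> ^ q)"
      unfolding c using h by (intro inner_word) simp
    also have "\<dots> = 0" using h q_ge2 by (simp add: poly_d_frob zero_power)
    finally have "emb (\<Sum>i<n. coeff c i * coeff d i) = 0" .
    thus ?thesis by (simp only: emb_eq_0_iff)
  qed
  thus "d \<in> D" using h unfolding dual_code_def by auto
qed

definition Hd :: "'a poly" where "Hd = [: - embi \<zeta>, 1 :] * Qp \<delta>"

lemma Hd_nz: "Hd \<noteq> 0"
  unfolding Hd_def by (rule no_zero_divisors) (simp_all add: Qp_nz)

lemma degree_Hd: "degree Hd = 3"
  unfolding Hd_def by (subst degree_mult_eq) (simp_all add: Qp_nz degree_Qp)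

lemma poly_M_Hd: "poly (M Hd) x = (x - \<zeta>) * poly (M (Qp \<delta>)) x"
  by (simp add: Hd_def zeta_E algebra_simps)

lemma delta_q_notE: "\<delta> ^ q \<notin> E"
proof
  assume "\<delta> ^ q \<in> E"
  hence "(\<delta> ^ q) ^ q = \<delta> ^ q" by (simp add: E_iff)
  hence "\<delta> = \<delta> ^ q" by (simp add: frob_sq flip: power_mult)
  thus False using delta_notE by (simp add: E_iff)
qed

lemma D_eq: "D = {d. degree d < n \<and> Hd dvd d}"
proof (rule set_eqI, rule iffI)
  fix d assume dD: "d \<in> D"
  hence h: "degree d < n" "poly (M d) \<zeta> = 0" "poly (M d) \<delta> = 0" by (auto simp: D_iff)
  have h3: "poly (M d) (\<delta> ^ q) = 0" using h q_ge2 by (simp add: poly_d_frob zero_power)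
  have ne: "\<zeta> \<noteq> \<delta>" "\<zeta> \<noteq> \<delta> ^ q" "\<delta> \<noteq> \<delta> ^ q"
    using zeta_E delta_notE delta_q_notE by (auto simp: E_iff)
  have "Hd dvd d"
  proof (rule dvd_by_roots[OF Hd_nz, of "{\<zeta>, \<delta>, \<delta> ^ q}"])
    show "degree Hd \<le> card {\<zeta>, \<delta>, \<delta> ^ q}" using ne by (simp add: degree_Hd)
    show "poly (M Hd) x = 0" if "x \<in> {\<zeta>, \<delta>, \<delta> ^ q}" for x
      using that Qp_root1[of \<delta>] Qp_root2[of \<delta>] by (auto simp: poly_M_Hd)
    show "poly (M d) x = 0" if "x \<in> {\<zeta>, \<delta>, \<delta> ^ q}" for x using that h h3 by auto
  qed
  thus "d \<in> {d. degree d < n \<and> Hd dvd d}" using h by simp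
next
  fix d assume "d \<in> {d. degree d < n \<and> Hd dvd d}"
  hence h: "degree d < n" "Hd dvd d" by auto
  have "poly (M d) \<zeta> = 0" by (rule M_dvd_root[OF h(2)]) (simp add: poly_M_Hd)
  moreover have "poly (M d) \<delta> = 0" by (rule M_dvd_root[OF h(2)]) (simp add: poly_M_Hd Qp_root1)
  ultimately show "d \<in> D" using h by (simp add: D_iff)
qed

lemma card_D: "card D = q ^ (n - 3)"
  unfolding D_eq using mult_card[OF Hd_nz] n_ge3 by (simp add: degree_Hd)

lemma D_linear: "is_linear_code n D"
proof -
  have sm: "(\<Sum>i<n. coeff c i * (a * coeff d i)) = a * (\<Sum>i<n. coeff c i * coeff d i)"
    for c d :: "'a poly" and a by (simp add: sum_distrib_left algebra_simps)
  have ad: "(\<Sum>i<n. coeff c i * (coeff d i + coeff d' i)) =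
     (\<Sum>i<n. coeff c i * coeff d i) + (\<Sum>i<n. coeff c i * coeff d' i)"
    for c d d' :: "'a poly" by (simp add: distrib_left sum.distrib)
  show ?thesis
    unfolding is_linear_code_def dual_code_def using n_pos
    by (auto intro: degree_add_less le_less_trans[OF degree_smult_le] simp: sm ad)
qed

lemma D_cyclic: "is_cyclic n D"
  unfolding is_cyclic_def
proof
  fix d assume dD: "d \<in> D"
  hence h: "degree d < n" "poly (M d) \<zeta> = 0" "poly (M d) \<delta> = 0" by (auto simp: D_iff)
  define s where "s = (monom 1 1 * d) mod Xn"
  have "s = 0 \<or> degree s < degree Xn" unfolding s_def by (rule degree_mod_less[OF Xn_nz])
  hence ds: "degree s < n" using n_pos by (auto simp: degree_Xn)
  have dec: "monom 1 1 * d = Xn * ((monom 1 1 * d) div Xn) + s" unfolding s_def by simp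
  have ev: "poly (M s) x = 0" if "x \<noteq> 0" "poly (M d) x = 0" for x
  proof -
    have "poly (M (monom 1 1 * d)) x = poly (M Xn) x * poly (M ((monom 1 1 * d) div Xn)) x + poly (M s) x"
      by (subst dec) simp
    moreover have "poly (M (monom 1 1 * d)) x = 0" using that by (simp add: poly_monom)
    moreover have "poly (M Xn) x = 0" using that by (simp add: poly_M_Xn unit_pow_n)
    ultimately show ?thesis by simp
  qed
  have "s \<in> D" using ds ev[OF zeta_nz h(2)] ev[OF delta_nz h(3)] by (simp add: D_iff)
  thus "(monom 1 1 * d) mod (monom 1 n - 1) \<in> D" unfolding s_def Xn_def .
qed

end

context ccode
begin

definition Ks :: "'b set" where "Ks = {y. y \<noteq> 0}"
definition Es :: "'b set" where "Es = E - {0}"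

lemma card_Ks: "card Ks = n" unfolding Ks_def by (rule card_nz)
lemma card_Es: "card Es = q - 1" unfolding Es_def using card_E by (simp add: card_Diff_singleton)
lemma finite_Es: "finite Es" and finite_Ks: "finite Ks" by auto

definition Ys :: "('b \<times> 'b) set" where "Ys = {(y1, y2). y1 \<noteq> 0 \<and> y2 \<noteq> 0 \<and> y1 \<noteq> y2}"
definition As :: "('b \<times> 'b) set" where
  "As = {(a1, a2). a1 \<in> Es \<and> a2 \<in> Es \<and> a1 + a2 \<noteq> 0}"

lemma card_Ys: "card Ys = n * (n - 1)"
proof -
  have eq: "Ys = (SIGMA y1:Ks. Ks - {y1})" unfolding Ys_def Ks_def by auto
  have "card Ys = (\<Sum>y1\<in>Ks. card (Ks - {y1}))" unfolding eq by (rule card_SigmaI) auto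
  also have "\<dots> = (\<Sum>y1\<in>Ks. n - 1)"
    by (rule sum.cong[OF refl]) (simp add: card_Diff_singleton card_Ks)
  finally show ?thesis by (simp add: card_Ks)
qed

lemma card_As: "card As = (q - 1) * (q - 2)"
proof -
  have "As = (SIGMA a1:Es. Es - {- a1})" unfolding As_def Es_def
    by (auto simp: add_eq_0_iff)
  hence "card As = (\<Sum>a1\<in>Es. card (Es - {- a1}))" by (simp only:) (rule card_SigmaI, auto)
  also have "\<dots> = (\<Sum>a1\<in>Es. q - 2)"
  proof (rule sum.cong[OF refl])
    fix a1 assume "a1 \<in> Es"
    hence "- a1 \<in> Es" unfolding Es_def by (auto intro: E_minus)
    thus "card (Es - {- a1}) = q - 2" by (simp add: card_Diff_singleton card_Es)
  qed
  finally show ?thesis by (simp add: card_Es)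
qed

definition Pset :: "('b \<times> 'b \<times> 'b \<times> 'b) set" where
  "Pset = {(y1, y2, a1, a2). (y1, y2) \<in> Ys \<and> (a1, a2) \<in> As}"

definition Nset :: "('b \<times> 'b \<times> 'b \<times> 'b) set" where
  "Nset = {(y1, y2, a1, a2). (y1, y2, a1, a2) \<in> Pset \<and> a1 * y1 + a2 * y2 \<noteq> 0}"

definition Bad :: "('b \<times> 'b \<times> 'b \<times> 'b) set" where
  "Bad = {(y1, y2, a1, a2). (y1, y2, a1, a2) \<in> Pset \<and> a1 * y1 + a2 * y2 = 0}"

lemma card_Pset: "card Pset = n * (n - 1) * ((q - 1) * (q - 2))"
proof -
  have "Pset = (\<lambda>((y1, y2), (a1, a2)). (y1, y2, a1, a2)) ` (Ys \<times> As)"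
    unfolding Pset_def by force
  moreover have "inj_on (\<lambda>((y1, y2), (a1, a2)). (y1, y2, a1, a2)) (Ys \<times> As)"
    by (auto simp: inj_on_def)
  ultimately show ?thesis by (simp add: card_image card_cartesian_product card_Ys card_As)
qed

lemma card_Bad: "card Bad = n * ((q - 1) * (q - 2))"
proof -
  have "Bad = (\<lambda>(y1, (a1, a2)). (y1, - a1 * y1 / a2, a1, a2)) ` (Ks \<times> As)"
  proof (rule set_eqI, rule iffI)
    fix t assume "t \<in> Bad"
    then obtain y1 y2 a1 a2 where t: "t = (y1, y2, a1, a2)" "(y1, y2) \<in> Ys" "(a1, a2) \<in> As"
      "a1 * y1 + a2 * y2 = 0" unfolding Bad_def Pset_def by auto
    have a2: "a2 \<noteq> 0" using t(3) unfolding As_def Es_def by auto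
    have "y2 = - a1 * y1 / a2" using t(4) a2 by (simp add: field_simps eq_neg_iff_add_eq_0 add.commute)
    moreover have "y1 \<in> Ks" using t(2) unfolding Ys_def Ks_def by auto
    ultimately show "t \<in> (\<lambda>(y1, (a1, a2)). (y1, - a1 * y1 / a2, a1, a2)) ` (Ks \<times> As)"
      using t by (auto intro!: image_eqI[of _ _ "(y1, (a1, a2))"])
  next
    fix t assume "t \<in> (\<lambda>(y1, (a1, a2)). (y1, - a1 * y1 / a2, a1, a2)) ` (Ks \<times> As)"
    then obtain y1 a1 a2 where t: "t = (y1, - a1 * y1 / a2, a1, a2)" "y1 \<in> Ks" "(a1, a2) \<in> As"
      by auto
    have h: "a1 \<noteq> 0" "a2 \<noteq> 0" "a1 + a2 \<noteq> 0" "y1 \<noteq> 0"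
      using t(2,3) unfolding As_def Es_def Ks_def by auto
    have "- a1 * y1 / a2 \<noteq> y1"
    proof
      assume "- a1 * y1 / a2 = y1"
      hence "- (a1 * y1) = a2 * y1" using h by (simp add: field_simps)
      hence "(a1 + a2) * y1 = 0" by (simp add: distrib_right add_eq_0_iff)
      thus False using h by simp
    qed
    moreover have "- a1 * y1 / a2 \<noteq> 0" using h by simp
    moreover have "a1 * y1 + a2 * (- a1 * y1 / a2) = 0" using h by (simp add: field_simps)
    ultimately show "t \<in> Bad" using t h unfolding Bad_def Pset_def Ys_def by auto
  qed
  moreover have "inj_on (\<lambda>(y1, (a1, a2)). (y1, - a1 * y1 / a2, a1, a2)) (Ks \<times> As)"
    by (auto simp: inj_on_def)
  ultimately show ?thesis by (simp add: card_image card_cartesian_product card_Ks card_As)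
qed

lemma finite_Pset: "finite Pset" by simp

lemma card_Nset: "card Nset = n * (n - 2) * ((q - 1) * (q - 2))"
proof -
  have "Nset = Pset - Bad" unfolding Nset_def Bad_def by auto
  moreover have "Bad \<subseteq> Pset" unfolding Bad_def by auto
  ultimately have "card Nset = card Pset - card Bad" by (simp add: card_Diff_subset)
  also have "\<dots> = n * (n - 1) * ((q - 1) * (q - 2)) - n * ((q - 1) * (q - 2))"
    by (simp add: card_Pset card_Bad)
  also have "\<dots> = n * (n - 2) * ((q - 1) * (q - 2))"
  proof -
    have "n * (n - 1) = n * (n - 2) + n" using n_ge3
      by (simp add: algebra_simps diff_mult_distrib2)
    hence "n * (n - 1) - n = n * (n - 2)" by simp
    moreover have "n * (n - 1) * X - n * X = (n * (n - 1) - n) * X" for X :: nat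
      by (simp add: diff_mult_distrib)
    ultimately show ?thesis by simp
  qed
  finally show ?thesis .
qed

end

context ccode
begin

definition supp :: "'a poly \<Rightarrow> nat set" where "supp d = {i. i < n \<and> coeff d i \<noteq> 0}"
definition \<alpha> :: "'a poly \<Rightarrow> nat \<Rightarrow> 'b" where "\<alpha> d i = emb (coeff d i) * \<zeta> ^ i"

lemma wt_supp: "hamming_wt n d = card (supp d)"
  unfolding hamming_wt_def supp_def ..

lemma alpha_E: "\<alpha> d i \<in> E" unfolding \<alpha>_def by (intro E_mult E_power zeta_E) simp

lemma alpha_nz_iff: "\<alpha> d i \<noteq> 0 \<longleftrightarrow> coeff d i \<noteq> 0" unfolding \<alpha>_def by simp

lemma finite_supp: "finite (supp d)" unfolding supp_def by simp

lemma poly_zeta_supp: "degree d < n \<Longrightarrow> poly (M d) \<zeta> = (\<Sum>i\<in>supp d. \<alpha> d i)"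
proof -
  assume d: "degree d < n"
  have "poly (M d) \<zeta> = (\<Sum>i<n. \<alpha> d i)" unfolding \<alpha>_def by (rule poly_M[OF d])
  also have "\<dots> = (\<Sum>i\<in>supp d. \<alpha> d i)"
    by (rule sum.mono_neutral_right) (auto simp: supp_def \<alpha>_def)
  finally show ?thesis .
qed

lemma poly_delta_supp: "degree d < n \<Longrightarrow> poly (M d) \<delta> = (\<Sum>i\<in>supp d. \<alpha> d i * \<rho> ^ i)"
proof -
  assume d: "degree d < n"
  have "poly (M d) \<delta> = (\<Sum>i<n. \<alpha> d i * \<rho> ^ i)" unfolding \<alpha>_def
    by (subst poly_M[OF d]) (simp add: delta_eq power_mult_distrib mult.assoc)
  also have "\<dots> = (\<Sum>i\<in>supp d. \<alpha> d i * \<rho> ^ i)"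
    by (rule sum.mono_neutral_right) (auto simp: supp_def \<alpha>_def)
  finally show ?thesis .
qed

lemma D_degree: "d \<in> D \<Longrightarrow> degree d < n" by (simp add: D_iff)

lemma rho_eq: "i < n \<Longrightarrow> j < n \<Longrightarrow> \<rho> ^ i = \<rho> ^ j \<longleftrightarrow> i = j"
  using rho_inj by (auto simp: inj_on_def)

lemma B1: "weight_freq n D 1 = 0"
proof -
  have "{c \<in> D. hamming_wt n c = 1} = {}"
  proof (rule ccontr)
    assume "{c \<in> D. hamming_wt n c = 1} \<noteq> {}"
    then obtain d where d: "d \<in> D" "card (supp d) = Suc 0" by (auto simp: wt_supp)
    then obtain i where s: "supp d = {i}" by (auto simp: card_1_singleton_iff)
    have "poly (M d) \<zeta> = \<alpha> d i" using poly_zeta_supp[OF D_degree[OF d(1)]] s by simp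
    moreover have "\<alpha> d i \<noteq> 0" using s by (auto simp: alpha_nz_iff supp_def)
    ultimately show False using d(1) by (simp add: D_iff)
  qed
  thus ?thesis unfolding weight_freq_def by (simp only: card.empty)
qed

lemma B2: "weight_freq n D 2 = 0"
proof -
  have "{c \<in> D. hamming_wt n c = 2} = {}"
  proof (rule ccontr)
    assume "{c \<in> D. hamming_wt n c = 2} \<noteq> {}"
    then obtain d where d: "d \<in> D" "card (supp d) = 2" by (auto simp: wt_supp)
    then obtain i j where s: "supp d = {i, j}" "i \<noteq> j" by (auto simp: card_2_iff)
    have ij: "i < n" "j < n" "coeff d i \<noteq> 0" using s unfolding supp_def by auto
    have e1: "\<alpha> d i + \<alpha> d j = 0"
      using poly_zeta_supp[OF D_degree[OF d(1)]] s d(1) by (simp add: D_iff)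
    have e2: "\<alpha> d i * \<rho> ^ i + \<alpha> d j * \<rho> ^ j = 0"
      using poly_delta_supp[OF D_degree[OF d(1)]] s d(1) by (simp add: D_iff)
    have "\<alpha> d j = - \<alpha> d i" using e1 by (simp add: add_eq_0_iff)
    hence "\<alpha> d i * (\<rho> ^ i - \<rho> ^ j) = 0" using e2 by (simp add: algebra_simps)
    moreover have "\<alpha> d i \<noteq> 0" using ij by (simp add: alpha_nz_iff)
    ultimately have "\<rho> ^ i = \<rho> ^ j" by simp
    thus False using ij s(2) by (simp add: rho_eq)
  qed
  thus ?thesis unfolding weight_freq_def by (simp only: card.empty)
qed

definition Ord :: "nat set \<Rightarrow> (nat \<times> nat \<times> nat) set" where
  "Ord S = {(i, j, k). i \<noteq> j \<and> i \<noteq> k \<and> j \<noteq> k \<and> S = {i, j, k}}"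

lemma card_Ord: "card S = 3 \<Longrightarrow> card (Ord S) = 6"
proof -
  assume "card S = 3"
  then obtain a b c where S: "S = {a, b, c}" "a \<noteq> b" "b \<noteq> c" "a \<noteq> c"
    by (auto simp: card_3_iff)
  have "Ord S = {(a, b, c), (a, c, b), (b, a, c), (b, c, a), (c, a, b), (c, b, a)}"
  proof (rule set_eqI, rule iffI)
    fix t assume "t \<in> Ord S"
    then obtain i j k where t: "t = (i, j, k)" "i \<noteq> j" "i \<noteq> k" "j \<noteq> k" "{i, j, k} = {a, b, c}"
      unfolding Ord_def S by auto
    have "i \<in> {a, b, c}" "j \<in> {a, b, c}" "k \<in> {a, b, c}" using t(5) by blast+
    thus "t \<in> {(a, b, c), (a, c, b), (b, a, c), (b, c, a), (c, a, b), (c, b, a)}"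
      using t(1-4) by auto
  next
    fix t assume "t \<in> {(a, b, c), (a, c, b), (b, a, c), (b, c, a), (c, a, b), (c, b, a)}"
    thus "t \<in> Ord S" unfolding Ord_def S using S(2-4) by (auto simp: insert_commute)
  qed
  thus ?thesis using S(2-4) by simp
qed

lemma finite_D: "finite D"
  using card_D q_ge2 by (intro card_ge_0_finite) simp

definition D3 :: "'a poly set" where "D3 = {d \<in> D. hamming_wt n d = 3}"

definition Tset :: "('a poly \<times> nat \<times> nat \<times> nat) set" where
  "Tset = (SIGMA d:D3. Ord (supp d))"

lemma card_Tset: "card Tset = 6 * card D3"
proof -
  have fin: "finite (Ord S)" if "finite S" for S
  proof -
    have "Ord S \<subseteq> S \<times> S \<times> S" unfolding Ord_def by auto
    moreover have "finite (S \<times> S \<times> S)" using that by simp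
    ultimately show ?thesis by (rule finite_subset)
  qed
  have "card Tset = (\<Sum>d\<in>D3. card (Ord (supp d)))" unfolding Tset_def
    by (rule card_SigmaI) (use finite_D fin finite_supp in \<open>auto simp: D3_def\<close>)
  also have "\<dots> = (\<Sum>d\<in>D3. 6)"
    by (rule sum.cong[OF refl]) (simp add: card_Ord D3_def wt_supp)
  finally show ?thesis by simp
qed

lemma Tfacts:
  assumes d: "d \<in> D" and s: "supp d = {i, j, k}" and ne: "i \<noteq> j" "i \<noteq> k" "j \<noteq> k"
  shows "i < n" "j < n" "k < n" "\<alpha> d i \<noteq> 0" "\<alpha> d j \<noteq> 0" "\<alpha> d k \<noteq> 0"
    "\<alpha> d i + \<alpha> d j + \<alpha> d k = 0"
    "\<alpha> d i * \<rho> ^ i + \<alpha> d j * \<rho> ^ j + \<alpha> d k * \<rho> ^ k = 0"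
    "\<And>t. t \<notin> {i, j, k} \<Longrightarrow> coeff d t = 0"
proof -
  have mem: "i \<in> supp d" "j \<in> supp d" "k \<in> supp d" using s by auto
  thus "i < n" "j < n" "k < n" "\<alpha> d i \<noteq> 0" "\<alpha> d j \<noteq> 0" "\<alpha> d k \<noteq> 0"
    unfolding supp_def by (auto simp: alpha_nz_iff)
  show "\<alpha> d i + \<alpha> d j + \<alpha> d k = 0"
    using poly_zeta_supp[OF D_degree[OF d]] s ne d by (simp add: D_iff add.assoc)
  show "\<alpha> d i * \<rho> ^ i + \<alpha> d j * \<rho> ^ j + \<alpha> d k * \<rho> ^ k = 0"
    using poly_delta_supp[OF D_degree[OF d]] s ne d by (simp add: D_iff add.assoc)
  fix t assume t: "t \<notin> {i, j, k}"
  show "coeff d t = 0"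
  proof (cases "t < n")
    case True thus ?thesis using t s unfolding supp_def by blast
  next
    case False thus ?thesis using D_degree[OF d] by (intro coeff_eq_0) simp
  qed
qed

definition Phi :: "'a poly \<times> nat \<times> nat \<times> nat \<Rightarrow> 'b \<times> 'b \<times> 'b \<times> 'b" where
  "Phi t = (case t of (d, i, j, k) \<Rightarrow> (\<rho> ^ i, \<rho> ^ j, \<alpha> d i, \<alpha> d j))"

lemma Tset_mem: "(d, i, j, k) \<in> Tset \<longleftrightarrow>
    d \<in> D \<and> supp d = {i, j, k} \<and> i \<noteq> j \<and> i \<noteq> k \<and> j \<noteq> k"
proof -
  have "hamming_wt n d = 3" if "supp d = {i, j, k}" "i \<noteq> j" "i \<noteq> k" "j \<noteq> k"
    using that by (simp add: wt_supp)
  thus ?thesis unfolding Tset_def D3_def Ord_def by auto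
qed

end

context ccode
begin

lemma Phi_into: "t \<in> Tset \<Longrightarrow> Phi t \<in> Nset"
proof -
  assume "t \<in> Tset"
  then obtain d i j k where t: "t = (d, i, j, k)" and h: "d \<in> D" "supp d = {i, j, k}"
    "i \<noteq> j" "i \<noteq> k" "j \<noteq> k" by (cases t) (auto simp: Tset_mem)
  note F = Tfacts[OF h]
  have "\<alpha> d i + \<alpha> d j = - \<alpha> d k" using F(7) by (simp add: eq_neg_iff_add_eq_0)
  hence s1: "\<alpha> d i + \<alpha> d j \<noteq> 0" using F(6) by simp
  have "\<alpha> d i * \<rho> ^ i + \<alpha> d j * \<rho> ^ j = - (\<alpha> d k * \<rho> ^ k)"
    using F(8) by (simp add: eq_neg_iff_add_eq_0)
  hence s2: "\<alpha> d i * \<rho> ^ i + \<alpha> d j * \<rho> ^ j \<noteq> 0" using F(6) by simp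
  have "\<rho> ^ i \<noteq> \<rho> ^ j" using F(1,2) h(3) by (simp add: rho_eq)
  thus ?thesis unfolding t Phi_def Nset_def Pset_def Ys_def As_def Es_def
    using F(4,5) s1 s2 alpha_E by auto
qed

lemma Phi_inj: "inj_on Phi Tset"
proof (rule inj_onI)
  fix t t' assume tT: "t \<in> Tset" and t'T: "t' \<in> Tset" and eq: "Phi t = Phi t'"
  obtain d i j k where t: "t = (d, i, j, k)" and h: "d \<in> D" "supp d = {i, j, k}"
    "i \<noteq> j" "i \<noteq> k" "j \<noteq> k" using tT by (cases t) (auto simp: Tset_mem)
  obtain d' i' j' k' where t': "t' = (d', i', j', k')" and h': "d' \<in> D" "supp d' = {i', j', k'}"
    "i' \<noteq> j'" "i' \<noteq> k'" "j' \<noteq> k'" using t'T by (cases t') (auto simp: Tset_mem)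
  note F = Tfacts[OF h] and F' = Tfacts[OF h']
  have e: "\<rho> ^ i = \<rho> ^ i'" "\<rho> ^ j = \<rho> ^ j'" "\<alpha> d i = \<alpha> d' i'" "\<alpha> d j = \<alpha> d' j'"
    using eq unfolding t t' Phi_def by auto
  have ii: "i' = i" using e(1) F(1) F'(1) by (simp add: rho_eq)
  have jj: "j' = j" using e(2) F(2) F'(2) by (simp add: rho_eq)
  have ak: "\<alpha> d k = \<alpha> d' k'"
  proof -
    have "\<alpha> d k = - (\<alpha> d i + \<alpha> d j)" using F(7) add_eq_0_iff[of "\<alpha> d i + \<alpha> d j" "\<alpha> d k"] by simp
    moreover have "\<alpha> d' k' = - (\<alpha> d' i' + \<alpha> d' j')" using F'(7) add_eq_0_iff[of "\<alpha> d' i' + \<alpha> d' j'" "\<alpha> d' k'"] by simp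
    ultimately show ?thesis using e by simp
  qed
  have "\<alpha> d k * \<rho> ^ k = \<alpha> d' k' * \<rho> ^ k'"
  proof -
    have "\<alpha> d k * \<rho> ^ k = - (\<alpha> d i * \<rho> ^ i + \<alpha> d j * \<rho> ^ j)" using F(8)
      add_eq_0_iff[of "\<alpha> d i * \<rho> ^ i + \<alpha> d j * \<rho> ^ j" "\<alpha> d k * \<rho> ^ k"] by simp
    moreover have "\<alpha> d' k' * \<rho> ^ k' = - (\<alpha> d' i' * \<rho> ^ i' + \<alpha> d' j' * \<rho> ^ j')" using F'(8)
      add_eq_0_iff[of "\<alpha> d' i' * \<rho> ^ i' + \<alpha> d' j' * \<rho> ^ j'" "\<alpha> d' k' * \<rho> ^ k'"] by simp
    ultimately show ?thesis using e by simp
  qed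
  hence "\<rho> ^ k = \<rho> ^ k'" using ak F(6) by simp
  hence kk: "k' = k" using F(3) F'(3) by (simp add: rho_eq)
  have ci: "coeff d i = coeff d' i" using e(3) ii by (simp add: \<alpha>_def)
  have cj: "coeff d j = coeff d' j" using e(4) jj by (simp add: \<alpha>_def)
  have ck: "coeff d k = coeff d' k" using ak kk by (simp add: \<alpha>_def)
  have "d = d'"
  proof (rule poly_eqI)
    fix s
    show "coeff d s = coeff d' s"
    proof (cases "s \<in> {i, j, k}")
      case True thus ?thesis using ci cj ck by auto
    next
      case False
      thus ?thesis using F(9)[OF False] F'(9)[of s] ii jj kk by simp
    qed
  qed
  thus "t = t'" using t t' ii jj kk by simp
qed

lemma Phi_onto: "Nset \<subseteq> Phi ` Tset"
proof
  fix x assume "x \<in> Nset"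
  then obtain y1 y2 a1 a2 where x: "x = (y1, y2, a1, a2)" and
    h: "y1 \<noteq> 0" "y2 \<noteq> 0" "y1 \<noteq> y2" "a1 \<in> E" "a1 \<noteq> 0" "a2 \<in> E" "a2 \<noteq> 0"
      "a1 + a2 \<noteq> 0" "a1 * y1 + a2 * y2 \<noteq> 0"
    unfolding Nset_def Pset_def Ys_def As_def Es_def by auto
  define a3 where "a3 = - (a1 + a2)"
  define y3 where "y3 = (a1 * y1 + a2 * y2) / (a1 + a2)"
  have "a1 + a2 \<in> E" using h by (intro E_add)
  hence a3: "a3 \<in> E" "a3 \<noteq> 0" using h unfolding a3_def by (auto dest: E_minus)
  have y3: "y3 \<noteq> 0" using h unfolding y3_def by simp
  have y31: "y3 \<noteq> y1"
  proof
    assume "y3 = y1"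
    hence "a1 * y1 + a2 * y2 = (a1 + a2) * y1" using h(8) unfolding y3_def by (simp add: field_simps)
    hence "a2 * (y2 - y1) = 0" by (simp add: algebra_simps)
    thus False using h by simp
  qed
  have y32: "y3 \<noteq> y2"
  proof
    assume "y3 = y2"
    hence "a1 * y1 + a2 * y2 = (a1 + a2) * y2" using h(8) unfolding y3_def by (simp add: field_simps)
    hence "a1 * (y1 - y2) = 0" by (simp add: algebra_simps)
    thus False using h by simp
  qed
  have ex: "\<exists>i<n. \<rho> ^ i = y" if "y \<noteq> 0" for y
  proof -
    have "y \<in> (\<lambda>i. \<rho> ^ i) ` {..<n}" using that rho_img by auto
    thus ?thesis by auto
  qed
  obtain i where i: "i < n" "\<rho> ^ i = y1" using ex[OF h(1)] by blast
  obtain j where j: "j < n" "\<rho> ^ j = y2" using ex[OF h(2)] by blast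
  obtain k where k: "k < n" "\<rho> ^ k = y3" using ex[OF y3] by blast
  have ij: "i \<noteq> j" using i j h(3) by auto
  have ik: "i \<noteq> k" using i k y31 by auto
  have jk: "j \<noteq> k" using j k y32 by auto
  define c1 where "c1 = embi (a1 / \<zeta> ^ i)"
  define c2 where "c2 = embi (a2 / \<zeta> ^ j)"
  define c3 where "c3 = embi (a3 / \<zeta> ^ k)"
  have ec: "emb c1 = a1 / \<zeta> ^ i" "emb c2 = a2 / \<zeta> ^ j" "emb c3 = a3 / \<zeta> ^ k"
    unfolding c1_def c2_def c3_def using h a3 zeta_E
    by (auto intro!: emb_embi E_divide E_power)
  have cnz: "c1 \<noteq> 0" "c2 \<noteq> 0" "c3 \<noteq> 0"
    using ec h a3 by (auto simp flip: emb_eq_0_iff)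
  define d where "d = monom c1 i + monom c2 j + monom c3 k"
  have cd: "coeff d s = (if s = i then c1 else if s = j then c2 else if s = k then c3 else 0)" for s
    unfolding d_def using ij ik jk by (auto simp: coeff_monom)
  have al: "\<alpha> d i = a1" "\<alpha> d j = a2" "\<alpha> d k = a3"
    unfolding \<alpha>_def using cd ec ij ik jk by auto
  have sd: "supp d = {i, j, k}"
    unfolding supp_def using cd cnz i j k by auto
  have dd: "degree d < n"
  proof -
    have "degree d \<le> n - 1"
      by (rule degree_le) (use cd i j k in auto)
    thus ?thesis using n_pos by simp
  qed
  have z: "poly (M d) \<zeta> = 0"
    using poly_zeta_supp[OF dd] sd al ij ik jk by (simp add: a3_def)
  have dl: "poly (M d) \<delta> = 0"
  proof -
    have "poly (M d) \<delta> = a1 * y1 + a2 * y2 + a3 * y3"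
      using poly_delta_supp[OF dd] sd al ij ik jk i j k by (simp add: add.assoc)
    also have "\<dots> = 0" unfolding a3_def y3_def using h(8) by (simp add: field_simps)
    finally show ?thesis .
  qed
  have "d \<in> D" using dd z dl by (simp add: D_iff)
  hence "(d, i, j, k) \<in> Tset" using sd ij ik jk by (simp add: Tset_mem)
  moreover have "Phi (d, i, j, k) = x" unfolding Phi_def x using al i j by simp
  ultimately show "x \<in> Phi ` Tset" by force
qed

lemma card_D3: "6 * card D3 = n * (n - 2) * ((q - 1) * (q - 2))"
proof -
  have "Phi ` Tset = Nset" using Phi_into Phi_onto by blast
  hence "card Tset = card Nset" using card_image[OF Phi_inj] by simp
  thus ?thesis using card_Tset card_Nset by simp
qed

lemma B3: "real (weight_freq n D 3) =
    (real q ^ 2 - 3) * (real q ^ 2 - 1) * (real q - 2) * (real q - 1) / 6"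
proof -
  have w: "weight_freq n D 3 = card D3" unfolding weight_freq_def D3_def ..
  have "6 * real (card D3) = real n * real (n - 2) * (real (q - 1) * real (q - 2))"
    using card_D3 by (metis of_nat_mult of_nat_numeral)
  moreover have "real n = real q ^ 2 - 1" using q_ge2 unfolding n_def by (simp add: of_nat_diff)
  moreover have "real (n - 2) = real q ^ 2 - 3" using n_ge3 q_ge2 unfolding n_def
    by (simp add: of_nat_diff)
  moreover have "real (q - 1) = real q - 1" "real (q - 2) = real q - 2" using q_ge2
    by (simp_all add: of_nat_diff)
  ultimately show ?thesis unfolding w by (simp add: field_simps)
qed

end

context ccode
begin

lemma D_min_dist:
  assumes q2: "q > 2"
  shows "min_dist n D = 3"
proof -
  have fin: "finite (nonzero_weights n D)"
  proof -
    have le: "hamming_wt n d \<le> n" for d :: "'a poly"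
    proof -
      have "hamming_wt n d \<le> card {..<n}" unfolding hamming_wt_def by (rule card_mono) auto
      thus ?thesis by simp
    qed
    have "nonzero_weights n D \<subseteq> {..n}"
      unfolding nonzero_weights_def using le by auto
    thus ?thesis by (rule finite_subset) simp
  qed
  have empty: "{c \<in> D. hamming_wt n c = w} = {}" if "w = 1 \<or> w = 2" for w
  proof -
    have "card {c \<in> D. hamming_wt n c = w} = 0" using that B1 B2 unfolding weight_freq_def by auto
    thus ?thesis using finite_D by simp
  qed
  have ge: "3 \<le> w" if wD: "w \<in> nonzero_weights n D" for w
  proof -
    obtain d where d: "w = hamming_wt n d" "d \<in> D" "d \<noteq> 0"
      using wD unfolding nonzero_weights_def by blast
    have "w \<noteq> 0"
    proof
      assume "w = 0"
      hence "supp d = {}" using d finite_supp by (simp add: wt_supp)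
      hence "\<forall>i<n. coeff d i = 0" unfolding supp_def by auto
      moreover have "\<forall>i\<ge>n. coeff d i = 0" using D_degree[OF d(2)] by (auto intro: coeff_eq_0)
      ultimately have "d = 0" by (metis leI poly_eqI coeff_0)
      thus False using d by simp
    qed
    moreover have "w \<noteq> 1" "w \<noteq> 2" using empty d by auto
    ultimately show ?thesis by linarith
  qed
  have "real (weight_freq n D 3) > 0"
  proof -
    have r3: "real q \<ge> 3" using q2 by simp
    have "real q ^ 2 \<ge> 3 ^ 2" by (rule power_mono[OF r3]) simp
    hence "real q ^ 2 - 3 > 0" "real q ^ 2 - 1 > 0" "real q - 2 > 0" "real q - 1 > 0"
      using r3 by auto
    thus ?thesis unfolding B3 by simp
  qed
  hence "card {c \<in> D. hamming_wt n c = 3} \<noteq> 0" unfolding weight_freq_def by simp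
  hence "{c \<in> D. hamming_wt n c = 3} \<noteq> {}" by (metis card.empty)
  then obtain d where d: "d \<in> D" "hamming_wt n d = 3" by auto
  have "d \<noteq> 0" using d by (auto simp: hamming_wt_def)
  hence "3 \<in> nonzero_weights n D" using d unfolding nonzero_weights_def by auto
  thus ?thesis unfolding min_dist_def using fin ge by (intro Min_eqI) auto
qed

end

theorem theorem1:
  fixes emb :: "'a::{field,finite} \<Rightarrow> 'b::{field,finite}"
    and \<gamma> :: 'b and e1 e2 :: int and q n :: nat and h :: "int \<Rightarrow> 'a poly"
  assumes q_def: "q = CARD('a)"
    and ext: "CARD('b) = q ^ 2"
    and emb: "field_embedding emb"
    and prim: "primitive_element \<gamma>"
    and h_def: "\<And>a. h a = min_poly emb (\<gamma> powi (- a))"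
    and n_def: "n = q ^ 2 - 1"
    and g1: "gcd (int q - 1) (2 * e1 - e2) = 1"
    and g2: "gcd (int q + 1) e2 = 1"
  shows
    "degree (h ((int q + 1) * e1)) = 1 \<and> degree (h e2) = 2
     \<and> h ((int q + 1) * e1) dvd (monom 1 n - 1) \<and> h e2 dvd (monom 1 n - 1)
     \<and> cyclic_code_pc n (h ((int q + 1) * e1)) \<noteq> cyclic_code_pc n (h e2)
     \<and> is_linear_code n (cyclic_code_pc n (h ((int q + 1) * e1)))
     \<and> is_linear_code n (cyclic_code_pc n (h e2))
     \<and> nonzero_weights n (cyclic_code_pc n (h ((int q + 1) * e1))) = {q ^ 2 - 1}
     \<and> nonzero_weights n (cyclic_code_pc n (h e2)) = {q * (q - 1)}
     \<and> (let C = cyclic_code_pc n (h ((int q + 1) * e1) * h e2);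
            D = dual_code n C in
          h ((int q + 1) * e1) * h e2 dvd (monom 1 n - 1)
        \<and> code_params n 3 (q * (q - 1) - 1) C
        \<and> griesmer_optimal n 3 (q * (q - 1) - 1) TYPE('a)
        \<and> nonzero_weights n C = {q * (q - 1) - 1, q * (q - 1), q ^ 2 - 1}
        \<and> card (nonzero_weights n C) = 3
        \<and> weight_freq n C 0 = 1
        \<and> weight_freq n C (q * (q - 1) - 1) = (q - 1) * (q ^ 2 - 1)
        \<and> weight_freq n C (q * (q - 1)) = q ^ 2 - 1
        \<and> weight_freq n C (q ^ 2 - 1) = q - 1
        \<and> weight_freq n D 1 = 0 \<and> weight_freq n D 2 = 0
        \<and> real (weight_freq n D 3) =
            (real q ^ 2 - 3) * (real q ^ 2 - 1) * (real q - 2) * (real q - 1) / 6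
        \<and> (q > 2 \<longrightarrow> is_cyclic n D \<and> code_params n (q ^ 2 - 4) 3 D))"
proof -
  interpret ccode emb \<gamma> e1 e2 q n
    by unfold_locales (use assms in auto)
  have H1: "h ((int q + 1) * e1) = h1" using h_def h1_eq by simp
  have H2: "h e2 = h2" using h_def h2_eq by simp
  have mono: "monom 1 n - 1 = Xn" unfolding Xn_def ..
  have A: "q ^ 2 - 1 = n" "q * (q - 1) = n + 1 - q" "q * (q - 1) - 1 = n - q"
    using arith1 by simp_all
  have nzw: "nonzero_weights n Cc = {n - q, n + 1 - q, n}" by (rule nzw_C12)
  have card3: "card (nonzero_weights n Cc) = 3" unfolding nzw using wt_values by auto
  have cp: "code_params n 3 (n - q) Cc"
    unfolding code_params_def using code_linear card_C12 min_dist_C12 by simp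
  have gr: "griesmer_optimal n 3 (n - q) TYPE('a)" using griesmer A by simp
  have dual: "q > 2 \<longrightarrow> is_cyclic n D \<and> code_params n (q ^ 2 - 4) 3 D"
  proof
    assume q2: "q > 2"
    have "card D = CARD('a) ^ (q ^ 2 - 4)" using card_D q_def n_def by simp
    thus "is_cyclic n D \<and> code_params n (q ^ 2 - 4) 3 D"
      unfolding code_params_def using D_cyclic D_linear D_min_dist[OF q2] by simp
  qed
  show ?thesis
    unfolding H1 H2 mono A Let_def
    using degree_h1 degree_h2 h1_dvd h2_dvd C1_ne_C2 code_linear[of h1] code_linear[of h2] nzw_C1 nzw_C2 h12_dvd cp gr nzw
      card3 wf_C12_0 wf_C12_1 wf_C12_2 wf_C12_3 B1 B2 B3 dual
    by (simp add: mult.commute)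
qed

end
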